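(* Let $I$ and $J$ be compositions of $n$. The induced $HCl_n(0)$-supermodules $M_I$ and $M_J$ are isomorphic if and only if $HP(I)=HP(J)$.
   Context: For a composition $I=(i_1,\dots,i_r)$ of $n$, $\operatorname{Des}(I)=\{i_1,\dots,i_1+\cdots+i_{r-1}\}\subseteq[1,n-1]$, and the peak set is $HP(I)=\{a\in\operatorname{Des}(I):a\ne1,\ a-1\notin\operatorname{Des}(I)\}$. $HCl_n(0)$ is the complex superalgebra generated by even elements $T_1,\dots,T_{n-1}$ and odd elements $c_1,\dots,c_n$, with the relations $T_i^2=-T_i$, $T_iT_j=T_jT_i$ ($|i-j|>1$), $T_iT_{i+1}T_i=T_{i+1}T_iT_{i+1}$, $c_ic_j=-c_jc_i$ ($i\ne j$), $c_i^2=-1$, $T_ic_j=c_jT_i$ ($j\ne i,i+1$), $T_ic_i=c_{i+1}T_i$, and $(T_i+1)c_{i+1}=c_i(T_i+1)$. $H_n(0)$ is the subalgebra generated by the $T_i$. $S_I=\mathbb{C}\epsilon_I$ is the one-dimensional $H_n(0)$-module with $T_j\epsilon_I=-\epsilon_I$ if $j\in\operatorname{Des}(I)$ and $T_j\epsilon_I=0$ otherwise. $M_I=HCl_n(0)\otimes_{H_n(0)}S_I$ is a supermodule with basis $c_D\epsilon_I$ ($D\subseteq\{1,\dots,n\}$, where $c_D$ is the increasing product of the $c_d$, $d\in D$), with the parity of $c_D\epsilon_I$ equal to that of $|D|$. Isomorphism of supermodules means a grading-preserving $HCl_n(0)$-module isomorphism. *)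

theory Defs
  imports Complex_Main
begin

definition composition :: "nat \<Rightarrow> nat list \<Rightarrow> bool" where
  "composition n I \<longleftrightarrow> (\<forall>i\<in>set I. 0 < i) \<and> sum_list I = n"

definition Des :: "nat list \<Rightarrow> nat set" where
  "Des I = {sum_list (take k I) | k. 0 < k \<and> k < length I}"

definition HP :: "nat list \<Rightarrow> nat set" where
  "HP I = {a \<in> Des I. a \<noteq> 1 \<and> a - 1 \<notin> Des I}"

datatype gen = T nat | C nat

text \<open>Elements of the free associative algebra: finitely supported coefficient
  functions on words of generators.\<close>
type_synonym fa = "gen list \<Rightarrow> complex"

definition Tv :: "nat \<Rightarrow> nat \<Rightarrow> bool" where "Tv n i \<longleftrightarrow> 1 \<le> i \<and> i < n"
definition Cv :: "nat \<Rightarrow> nat \<Rightarrow> bool" where "Cv n j \<longleftrightarrow> 1 \<le> j \<and> j \<le> n"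

definition gens :: "nat \<Rightarrow> gen set" where
  "gens n = {T i | i. Tv n i} \<union> {C j | j. Cv n j}"

definition FA :: "nat \<Rightarrow> fa set" where
  "FA n = {p. finite {w. p w \<noteq> 0} \<and> (\<forall>w. p w \<noteq> 0 \<longrightarrow> set w \<subseteq> gens n)}"

definition fadd :: "fa \<Rightarrow> fa \<Rightarrow> fa" where "fadd p q = (\<lambda>w. p w + q w)"
definition fsub :: "fa \<Rightarrow> fa \<Rightarrow> fa" where "fsub p q = (\<lambda>w. p w - q w)"
definition fmul :: "fa \<Rightarrow> fa \<Rightarrow> fa" where
  "fmul p q = (\<lambda>w. \<Sum>k\<le>length w. p (take k w) * q (drop k w))"

definition comb :: "(complex \<times> gen list) list \<Rightarrow> fa" where
  "comb xs = (\<lambda>w. sum_list (map (\<lambda>(c,u). if u = w then c else 0) xs))"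

text \<open>Defining relations of HCl_n(0), each written as lhs - rhs.\<close>
definition rels :: "nat \<Rightarrow> fa set" where
  "rels n =
     {comb [(1,[T i,T i]),(1,[T i])] | i. Tv n i}
   \<union> {comb [(1,[T i,T j]),(-1,[T j,T i])] | i j. Tv n i \<and> Tv n j \<and> (i + 1 < j \<or> j + 1 < i)}
   \<union> {comb [(1,[T i,T (i+1),T i]),(-1,[T (i+1),T i,T (i+1)])] | i. Tv n i \<and> Tv n (i+1)}
   \<union> {comb [(1,[C i,C j]),(1,[C j,C i])] | i j. Cv n i \<and> Cv n j \<and> i \<noteq> j}
   \<union> {comb [(1,[C i,C i]),(1,[])] | i. Cv n i}
   \<union> {comb [(1,[T i,C j]),(-1,[C j,T i])] | i j. Tv n i \<and> Cv n j \<and> j \<noteq> i \<and> j \<noteq> i+1}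
   \<union> {comb [(1,[T i,C i]),(-1,[C (i+1),T i])] | i. Tv n i}
   \<union> {comb [(1,[T i,C (i+1)]),(1,[C (i+1)]),(-1,[C i,T i]),(-1,[C i])] | i. Tv n i}"

inductive_set Rideal :: "nat \<Rightarrow> fa set" for n where
  rel: "r \<in> rels n \<Longrightarrow> r \<in> Rideal n"
| zero: "(\<lambda>_. 0) \<in> Rideal n"
| add: "x \<in> Rideal n \<Longrightarrow> y \<in> Rideal n \<Longrightarrow> fadd x y \<in> Rideal n"
| lmul: "a \<in> FA n \<Longrightarrow> x \<in> Rideal n \<Longrightarrow> fmul a x \<in> Rideal n"
| rmul: "a \<in> FA n \<Longrightarrow> x \<in> Rideal n \<Longrightarrow> fmul x a \<in> Rideal n"

text \<open>M_I = HCl_n(0) \<otimes>_{H_n(0)} S_I = HCl_n(0) / HCl_n(0)\<cdot>{T_j - \<lambda>_j},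
  presented as FA n / NI n I, where NI n I is the left ideal generated by the
  two-sided relation ideal and the elements T_j - \<lambda>_j (\<lambda>_j = -1 if j \<in> Des I, else 0).\<close>
inductive_set NI :: "nat \<Rightarrow> nat list \<Rightarrow> fa set" for n I where
  ideal: "x \<in> Rideal n \<Longrightarrow> x \<in> NI n I"
| gen: "Tv n j \<Longrightarrow> comb [(1,[T j]),(if j \<in> Des I then 1 else 0,[])] \<in> NI n I"
| add: "x \<in> NI n I \<Longrightarrow> y \<in> NI n I \<Longrightarrow> fadd x y \<in> NI n I"
| lmul: "a \<in> FA n \<Longrightarrow> x \<in> NI n I \<Longrightarrow> fmul a x \<in> NI n I"

text \<open>Z/2-grading: parity = parity of the number of odd generators c_j.\<close>
definition nC :: "gen list \<Rightarrow> nat" where "nC w = length (filter (\<lambda>g. case g of C _ \<Rightarrow> True | T _ \<Rightarrow> False) w)"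
definition homog_even :: "fa \<Rightarrow> bool" where "homog_even p \<longleftrightarrow> (\<forall>w. p w \<noteq> 0 \<longrightarrow> even (nC w))"
definition homog_odd :: "fa \<Rightarrow> bool" where "homog_odd p \<longleftrightarrow> (\<forall>w. p w \<noteq> 0 \<longrightarrow> odd (nC w))"

text \<open>Isomorphism of supermodules M_I \<cong> M_J, expressed on representatives:
  phi induces a well-defined, additive, HCl_n(0)-equivariant (hence C-linear),
  bijective, parity-preserving map FA/NI n I \<rightarrow> FA/NI n J.\<close>
definition super_iso :: "nat \<Rightarrow> nat list \<Rightarrow> nat list \<Rightarrow> bool" where
  "super_iso n I J \<longleftrightarrow> (\<exists>\<phi>.
      (\<forall>x\<in>FA n. \<phi> x \<in> FA n)
    \<and> (\<forall>x\<in>FA n. \<forall>y\<in>FA n. fsub x y \<in> NI n I \<longrightarrow> fsub (\<phi> x) (\<phi> y) \<in> NI n J)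
    \<and> (\<forall>x\<in>FA n. \<forall>y\<in>FA n. fsub (\<phi> (fadd x y)) (fadd (\<phi> x) (\<phi> y)) \<in> NI n J)
    \<and> (\<forall>a\<in>FA n. \<forall>x\<in>FA n. fsub (\<phi> (fmul a x)) (fmul a (\<phi> x)) \<in> NI n J)
    \<and> (\<forall>x\<in>FA n. \<phi> x \<in> NI n J \<longrightarrow> x \<in> NI n I)
    \<and> (\<forall>y\<in>FA n. \<exists>x\<in>FA n. fsub (\<phi> x) y \<in> NI n J)
    \<and> (\<forall>x\<in>FA n. homog_even x \<longrightarrow> (\<exists>y\<in>FA n. homog_even y \<and> fsub (\<phi> x) y \<in> NI n J))
    \<and> (\<forall>x\<in>FA n. homog_odd x \<longrightarrow> (\<exists>y\<in>FA n. homog_odd y \<and> fsub (\<phi> x) y \<in> NI n J)))"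

end

theory Submission
  imports Defs
begin
definition sing :: "complex \<Rightarrow> gen list \<Rightarrow> fa" where
  "sing c u = (\<lambda>w. if u = w then c else 0)"

lemma comb_Nil[simp]: "comb [] = (\<lambda>_. 0)"
  by (simp add: comb_def)

lemma comb_Cons: "comb ((c,u)#xs) = fadd (sing c u) (comb xs)"
  by (simp add: comb_def fadd_def sing_def)

lemma comb_append: "comb (xs@ys) = fadd (comb xs) (comb ys)"
  by (simp add: comb_def fadd_def)

lemma take_drop_eq_iff: "k \<le> length u + length v \<Longrightarrow> (u = take k (u@v) \<and> v = drop k (u@v)) \<longleftrightarrow> k = length u"
proof
  assume k: "k \<le> length u + length v" and h: "u = take k (u@v) \<and> v = drop k (u@v)"
  have a: "length u = length (take k (u@v))" by (rule arg_cong[OF conjunct1[OF h]])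
  have c: "length (take k (u@v)) = k" using k by simp
  from a c show "k = length u" by linarith
next
  assume "k = length u"
  then show "u = take k (u@v) \<and> v = drop k (u@v)" by simp
qed

lemma fmul_sing_sing: "fmul (sing c u) (sing d v) = sing (c*d) (u@v)"
proof
  fix w
  have eq: "(if u = take k w then c else 0) * (if v = drop k w then d else 0)
        = (if u @ v = w \<and> k = length u then c*d else 0)" if k: "k \<le> length w" for k
  proof (cases "u = take k w \<and> v = drop k w")
    case True
    then have uv: "u @ v = w" by (metis append_take_drop_id)
    then have "k = length u" using True take_drop_eq_iff[of k u v] k by auto
    then show ?thesis using True uv by auto
  next
    case False
    then have "\<not> (u @ v = w \<and> k = length u)" by auto
    then show ?thesis using False by auto
  qed
  have "fmul (sing c u) (sing d v) w = (\<Sum>k\<le>length w. if u @ v = w \<and> k = length u then c*d else 0)"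
    unfolding fmul_def sing_def using eq by (intro sum.cong) auto
  also have "\<dots> = sing (c*d) (u@v) w"
    by (cases "u @ v = w") (auto simp: sing_def)
  finally show "fmul (sing c u) (sing d v) w = sing (c*d) (u@v) w" .
qed

lemma fmul_fadd_left: "fmul (fadd p q) r = fadd (fmul p r) (fmul q r)"
  by (simp add: fmul_def fadd_def ring_distribs sum.distrib)

lemma fmul_fadd_right: "fmul p (fadd q r) = fadd (fmul p q) (fmul p r)"
  by (simp add: fmul_def fadd_def ring_distribs sum.distrib)

lemma fmul_zero_left[simp]: "fmul (\<lambda>_. 0) p = (\<lambda>_. 0)"
  by (simp add: fmul_def)

lemma fmul_zero_right[simp]: "fmul p (\<lambda>_. 0) = (\<lambda>_. 0)"
  by (simp add: fmul_def)

lemma fadd_zero_left[simp]: "fadd (\<lambda>_. 0) p = p"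
  by (simp add: fadd_def)
lemma fadd_zero_right[simp]: "fadd p (\<lambda>_. 0) = p"
  by (simp add: fadd_def)

definition cprod :: "(complex \<times> gen list) list \<Rightarrow> (complex \<times> gen list) list \<Rightarrow> (complex \<times> gen list) list" where
  "cprod xs ys = concat (map (\<lambda>(c,u). map (\<lambda>(d,v). (c*d, u@v)) ys) xs)"

lemma cprod_Nil[simp]: "cprod [] ys = []" "cprod xs [] = []"
  by (simp_all add: cprod_def)

lemma cprod_Cons: "cprod ((c,u)#xs) ys = map (\<lambda>(d,v). (c*d, u@v)) ys @ cprod xs ys"
  by (simp add: cprod_def)

lemma fmul_sing_comb: "fmul (sing c u) (comb ys) = comb (map (\<lambda>(d,v). (c*d, u@v)) ys)"
  by (induction ys) (auto simp: comb_Cons fmul_fadd_right fmul_sing_sing)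

lemma fmul_comb: "fmul (comb xs) (comb ys) = comb (cprod xs ys)"
  by (induction xs) (auto simp: comb_Cons cprod_Cons comb_append fmul_fadd_left fmul_sing_comb)

lemma cprod_append: "cprod (xs@ys) zs = cprod xs zs @ cprod ys zs"
  by (simp add: cprod_def)

lemma cprod_map: "cprod (map (\<lambda>(d,v). (c*d, u@v)) ys) zs = map (\<lambda>(d,v). (c*d, u@v)) (cprod ys zs)"
  by (induction ys) (auto simp: cprod_Cons mult.assoc)

lemma cprod_assoc: "cprod (cprod xs ys) zs = cprod xs (cprod ys zs)"
  by (induction xs) (auto simp: cprod_Cons cprod_append cprod_map)

lemma comb_rep:
  assumes "finite {w. p w \<noteq> 0}"
  shows "\<exists>xs. p = comb xs \<and> (\<forall>(c,u)\<in>set xs. p u \<noteq> 0)"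
proof -
  obtain L where L: "set L = {w. p w \<noteq> 0}" "distinct L"
    using finite_distinct_list[OF assms] by blast
  have "comb (map (\<lambda>w. (p w, w)) L) w = p w" for w
  proof -
    have "comb (map (\<lambda>w. (p w, w)) L) w = (\<Sum>u\<in>set L. if u = w then p u else 0)"
      using L(2) by (simp add: comb_def o_def sum_list_distinct_conv_sum_set)
    also have "\<dots> = (if w \<in> set L then p w else 0)" by simp
    also have "\<dots> = p w" using L(1) by auto
    finally show ?thesis .
  qed
  then show ?thesis using L(1) by (intro exI[of _ "map (\<lambda>w. (p w, w)) L"]) auto
qed

lemma fmul_assoc:
  assumes "finite {w. p w \<noteq> 0}" "finite {w. q w \<noteq> 0}" "finite {w. r w \<noteq> 0}"
  shows "fmul (fmul p q) r = fmul p (fmul q r)"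
proof -
  obtain xs ys zs where "p = comb xs" "q = comb ys" "r = comb zs"
    using comb_rep assms by metis
  then show ?thesis by (simp add: fmul_comb cprod_assoc)
qed


lemma comb_supp: "comb xs w \<noteq> 0 \<Longrightarrow> w \<in> snd ` set xs"
  by (induction xs) (auto simp: comb_Cons fadd_def sing_def split: if_splits)

lemma comb_fin: "finite {w. comb xs w \<noteq> 0}"
  by (rule finite_subset[of _ "snd ` set xs"]) (auto dest: comb_supp)

lemma comb_FA: "(\<And>c u. (c,u) \<in> set xs \<Longrightarrow> set u \<subseteq> gens n) \<Longrightarrow> comb xs \<in> FA n"
  unfolding FA_def using comb_fin by (force dest: comb_supp)

lemma FA_fin: "p \<in> FA n \<Longrightarrow> finite {w. p w \<noteq> 0}"
  by (simp add: FA_def)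

lemma FA_comb_rep:
  assumes "p \<in> FA n"
  shows "\<exists>xs. p = comb xs \<and> (\<forall>(c,u)\<in>set xs. set u \<subseteq> gens n)"
proof -
  obtain xs where "p = comb xs" "\<forall>(c,u)\<in>set xs. p u \<noteq> 0"
    using comb_rep[OF FA_fin[OF assms]] by blast
  then show ?thesis using assms unfolding FA_def by (intro exI[of _ xs]) auto
qed

lemma cprod_words: "(c,w) \<in> set (cprod xs ys) \<Longrightarrow> \<exists>a u b v. (a,u) \<in> set xs \<and> (b,v) \<in> set ys \<and> w = u @ v"
  by (auto simp: cprod_def)

lemma fmul_FA: "p \<in> FA n \<Longrightarrow> q \<in> FA n \<Longrightarrow> fmul p q \<in> FA n"
proof -
  assume p: "p \<in> FA n" and q: "q \<in> FA n"
  obtain xs where xs: "p = comb xs" "\<forall>(c,u)\<in>set xs. set u \<subseteq> gens n" using FA_comb_rep[OF p] by blast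
  obtain ys where ys: "q = comb ys" "\<forall>(c,u)\<in>set ys. set u \<subseteq> gens n" using FA_comb_rep[OF q] by blast
  show ?thesis unfolding xs ys fmul_comb
    apply (rule comb_FA)
    using xs(2) ys(2) by (fastforce dest!: cprod_words)
qed

lemma fadd_FA: "p \<in> FA n \<Longrightarrow> q \<in> FA n \<Longrightarrow> fadd p q \<in> FA n"
proof -
  assume p: "p \<in> FA n" and q: "q \<in> FA n"
  have "{w. fadd p q w \<noteq> 0} \<subseteq> {w. p w \<noteq> 0} \<union> {w. q w \<noteq> 0}" by (auto simp: fadd_def)
  then have "finite {w. fadd p q w \<noteq> 0}" using FA_fin[OF p] FA_fin[OF q] by (auto intro: finite_subset)
  moreover have "set w \<subseteq> gens n" if "fadd p q w \<noteq> 0" for w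
  proof -
    have "p w \<noteq> 0 \<or> q w \<noteq> 0" using that by (auto simp: fadd_def)
    then show ?thesis using p q unfolding FA_def by auto
  qed
  ultimately show ?thesis unfolding FA_def by blast
qed

lemma zero_FA: "(\<lambda>_. 0) \<in> FA n"
  by (simp add: FA_def)

definition one :: fa where "one = comb [(1,[])]"
definition scal :: "complex \<Rightarrow> fa" where "scal c = comb [(c,[])]"

lemma scal_FA: "scal c \<in> FA n" unfolding scal_def by (rule comb_FA) auto
lemma one_FA: "one \<in> FA n" unfolding one_def by (rule comb_FA) auto

lemma fmul_scal_left: "fmul (scal c) p = (\<lambda>w. c * p w)"
proof
  fix w
  have "fmul (scal c) p w = (\<Sum>k\<le>length w. if k = 0 then c * p w else 0)"
    unfolding fmul_def scal_def by (intro sum.cong) (auto simp: comb_def)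
  also have "\<dots> = c * p w" by simp
  finally show "fmul (scal c) p w = c * p w" .
qed

lemma fmul_scal_right: "fmul p (scal c) = (\<lambda>w. p w * c)"
proof
  fix w
  have "fmul p (scal c) w = (\<Sum>k\<le>length w. if k = length w then p w * c else 0)"
    unfolding fmul_def scal_def by (intro sum.cong) (auto simp: comb_def)
  also have "\<dots> = p w * c" by simp
  finally show "fmul p (scal c) w = p w * c" .
qed

lemma fmul_one_left[simp]: "fmul one p = p"
  using fmul_scal_left[of 1 p] by (simp add: one_def scal_def)
lemma fmul_one_right[simp]: "fmul p one = p"
  using fmul_scal_right[of p 1] by (simp add: one_def scal_def)

lemma fsub_as_fadd: "fsub x y = fadd x (fmul (scal (-1)) y)"
  by (simp add: fsub_def fadd_def fmul_scal_left)

lemma fsub_self: "fsub x x = (\<lambda>_. 0)"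
  by (simp add: fsub_def)

lemma fmul_fsub_left: "fmul (fsub p q) r = fsub (fmul p r) (fmul q r)"
  by (simp add: fmul_def fsub_def ring_distribs sum_subtractf)

lemma fmul_fsub_right: "fmul p (fsub q r) = fsub (fmul p q) (fmul p r)"
  by (simp add: fmul_def fsub_def ring_distribs sum_subtractf)

lemma gens_T[simp]: "T i \<in> gens n \<longleftrightarrow> Tv n i" by (auto simp: gens_def)
lemma gens_C[simp]: "C i \<in> gens n \<longleftrightarrow> Cv n i" by (auto simp: gens_def)

lemma rels_FA: "r \<in> rels n \<Longrightarrow> r \<in> FA n"
  unfolding rels_def by (auto intro!: comb_FA simp: Tv_def Cv_def)

lemma Rideal_FA: "x \<in> Rideal n \<Longrightarrow> x \<in> FA n"
  by (induction rule: Rideal.induct) (auto simp: rels_FA zero_FA fadd_FA fmul_FA)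

inductive_set NIs :: "nat \<Rightarrow> nat set \<Rightarrow> fa set" for n D where
  ideal: "x \<in> Rideal n \<Longrightarrow> x \<in> NIs n D"
| gen: "Tv n j \<Longrightarrow> comb [(1,[T j]),(if j \<in> D then 1 else 0,[])] \<in> NIs n D"
| add: "x \<in> NIs n D \<Longrightarrow> y \<in> NIs n D \<Longrightarrow> fadd x y \<in> NIs n D"
| lmul: "a \<in> FA n \<Longrightarrow> x \<in> NIs n D \<Longrightarrow> fmul a x \<in> NIs n D"

lemma NI_eq: "NI n I = NIs n (Des I)"
proof
  show "NI n I \<subseteq> NIs n (Des I)"
  proof
    fix x assume "x \<in> NI n I" then show "x \<in> NIs n (Des I)"
    proof (induction rule: NI.induct)
      case (ideal x) then show ?case by (rule NIs.ideal)
    next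
      case (gen j) then show ?case by (rule NIs.gen)
    next
      case (add x y) then show ?case by (intro NIs.add) 
    next
      case (lmul a x) then show ?case by (intro NIs.lmul)
    qed
  qed
  show "NIs n (Des I) \<subseteq> NI n I"
  proof
    fix x assume "x \<in> NIs n (Des I)" then show "x \<in> NI n I"
    proof (induction rule: NIs.induct)
      case (ideal x) then show ?case by (rule NI.ideal)
    next
      case (gen j) then show ?case by (rule NI.gen)
    next
      case (add x y) then show ?case by (intro NI.add) 
    next
      case (lmul a x) then show ?case by (intro NI.lmul)
    qed
  qed
qed

definition siso :: "nat \<Rightarrow> nat set \<Rightarrow> nat set \<Rightarrow> bool" where
  "siso n I J \<longleftrightarrow> (\<exists>\<phi>.
      (\<forall>x\<in>FA n. \<phi> x \<in> FA n)
    \<and> (\<forall>x\<in>FA n. \<forall>y\<in>FA n. fsub x y \<in> NIs n I \<longrightarrow> fsub (\<phi> x) (\<phi> y) \<in> NIs n J)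
    \<and> (\<forall>x\<in>FA n. \<forall>y\<in>FA n. fsub (\<phi> (fadd x y)) (fadd (\<phi> x) (\<phi> y)) \<in> NIs n J)
    \<and> (\<forall>a\<in>FA n. \<forall>x\<in>FA n. fsub (\<phi> (fmul a x)) (fmul a (\<phi> x)) \<in> NIs n J)
    \<and> (\<forall>x\<in>FA n. \<phi> x \<in> NIs n J \<longrightarrow> x \<in> NIs n I)
    \<and> (\<forall>y\<in>FA n. \<exists>x\<in>FA n. fsub (\<phi> x) y \<in> NIs n J)
    \<and> (\<forall>x\<in>FA n. homog_even x \<longrightarrow> (\<exists>y\<in>FA n. homog_even y \<and> fsub (\<phi> x) y \<in> NIs n J))
    \<and> (\<forall>x\<in>FA n. homog_odd x \<longrightarrow> (\<exists>y\<in>FA n. homog_odd y \<and> fsub (\<phi> x) y \<in> NIs n J)))"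

lemma super_iso_sup: "super_iso n I J \<longleftrightarrow> siso n (Des I) (Des J)"
  unfolding super_iso_def siso_def NI_eq ..

lemma gen_FA: "Tv n j \<Longrightarrow> comb [(1,[T j]),(c,[])] \<in> FA n"
  by (rule comb_FA) auto

lemma NIs_FA: "x \<in> NIs n D \<Longrightarrow> x \<in> FA n"
  by (induction rule: NIs.induct) (auto simp: Rideal_FA gen_FA fadd_FA fmul_FA)

lemma NIs_zero: "(\<lambda>_. 0) \<in> NIs n D"
  by (auto intro: NIs.ideal Rideal.zero)

lemma NIs_fsub: "x \<in> NIs n D \<Longrightarrow> y \<in> NIs n D \<Longrightarrow> fsub x y \<in> NIs n D"
  unfolding fsub_as_fadd by (auto intro!: NIs.add NIs.lmul scal_FA)

lemma NIs_trans: "fsub x y \<in> NIs n D \<Longrightarrow> fsub y z \<in> NIs n D \<Longrightarrow> fsub x z \<in> NIs n D"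
proof -
  have "fsub x z = fadd (fsub x y) (fsub y z)" by (auto simp: fsub_def fadd_def)
  then show "fsub x y \<in> NIs n D \<Longrightarrow> fsub y z \<in> NIs n D \<Longrightarrow> fsub x z \<in> NIs n D"
    by (auto intro: NIs.add)
qed

lemma NIs_sym: "fsub x y \<in> NIs n D \<Longrightarrow> fsub y x \<in> NIs n D"
proof -
  have "fsub y x = fmul (scal (-1)) (fsub x y)" by (auto simp: fsub_def fmul_scal_left)
  then show "fsub x y \<in> NIs n D \<Longrightarrow> fsub y x \<in> NIs n D"
    by (auto intro: NIs.lmul scal_FA)
qed

lemma NIs_refl: "fsub x x \<in> NIs n D"
  by (simp add: fsub_self NIs_zero)

lemma NIs_fsub_mem: "fsub x y \<in> NIs n D \<Longrightarrow> y \<in> NIs n D \<Longrightarrow> x \<in> NIs n D"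
proof -
  have "x = fadd (fsub x y) y" by (auto simp: fsub_def fadd_def)
  then show "fsub x y \<in> NIs n D \<Longrightarrow> y \<in> NIs n D \<Longrightarrow> x \<in> NIs n D" by (metis NIs.add)
qed

lemma siso_refl: "siso n D D"
  unfolding siso_def
  apply (rule exI[of _ id])
  apply (auto simp: NIs_refl)
  apply (metis NIs_refl)
  done

lemma siso_trans:
  assumes "siso n D E" "siso n E F"
  shows "siso n D F"
proof -
  obtain f where f1: "\<forall>x\<in>FA n. f x \<in> FA n"
    and f2: "\<forall>x\<in>FA n. \<forall>y\<in>FA n. fsub x y \<in> NIs n D \<longrightarrow> fsub (f x) (f y) \<in> NIs n E"
    and f3: "\<forall>x\<in>FA n. \<forall>y\<in>FA n. fsub (f (fadd x y)) (fadd (f x) (f y)) \<in> NIs n E"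
    and f4: "\<forall>a\<in>FA n. \<forall>x\<in>FA n. fsub (f (fmul a x)) (fmul a (f x)) \<in> NIs n E"
    and f5: "\<forall>x\<in>FA n. f x \<in> NIs n E \<longrightarrow> x \<in> NIs n D"
    and f6: "\<forall>y\<in>FA n. \<exists>x\<in>FA n. fsub (f x) y \<in> NIs n E"
    and f7: "\<forall>x\<in>FA n. homog_even x \<longrightarrow> (\<exists>y\<in>FA n. homog_even y \<and> fsub (f x) y \<in> NIs n E)"
    and f8: "\<forall>x\<in>FA n. homog_odd x \<longrightarrow> (\<exists>y\<in>FA n. homog_odd y \<and> fsub (f x) y \<in> NIs n E)"
    using assms(1) unfolding siso_def by blast
  obtain g where g1: "\<forall>x\<in>FA n. g x \<in> FA n"
    and g2: "\<forall>x\<in>FA n. \<forall>y\<in>FA n. fsub x y \<in> NIs n E \<longrightarrow> fsub (g x) (g y) \<in> NIs n F"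
    and g3: "\<forall>x\<in>FA n. \<forall>y\<in>FA n. fsub (g (fadd x y)) (fadd (g x) (g y)) \<in> NIs n F"
    and g4: "\<forall>a\<in>FA n. \<forall>x\<in>FA n. fsub (g (fmul a x)) (fmul a (g x)) \<in> NIs n F"
    and g5: "\<forall>x\<in>FA n. g x \<in> NIs n F \<longrightarrow> x \<in> NIs n E"
    and g6: "\<forall>y\<in>FA n. \<exists>x\<in>FA n. fsub (g x) y \<in> NIs n F"
    and g7: "\<forall>x\<in>FA n. homog_even x \<longrightarrow> (\<exists>y\<in>FA n. homog_even y \<and> fsub (g x) y \<in> NIs n F)"
    and g8: "\<forall>x\<in>FA n. homog_odd x \<longrightarrow> (\<exists>y\<in>FA n. homog_odd y \<and> fsub (g x) y \<in> NIs n F)"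
    using assms(2) unfolding siso_def by blast
  show ?thesis unfolding siso_def
  proof (rule exI[of _ "\<lambda>x. g (f x)"], intro conjI ballI impI)
    fix x assume "x \<in> FA n" then show "g (f x) \<in> FA n" using f1 g1 by auto
  next
    fix x y assume "x \<in> FA n" "y \<in> FA n" "fsub x y \<in> NIs n D"
    then show "fsub (g (f x)) (g (f y)) \<in> NIs n F" using f1 f2 g2 by auto
  next
    fix x y assume x: "x \<in> FA n" and y: "y \<in> FA n"
    have "fsub (g (f (fadd x y))) (g (fadd (f x) (f y))) \<in> NIs n F"
      using g2 f1 f3 x y fadd_FA by auto
    moreover have "fsub (g (fadd (f x) (f y))) (fadd (g (f x)) (g (f y))) \<in> NIs n F"
      using g3 f1 x y by auto
    ultimately show "fsub (g (f (fadd x y))) (fadd (g (f x)) (g (f y))) \<in> NIs n F"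
      by (rule NIs_trans)
  next
    fix a x assume a: "a \<in> FA n" and x: "x \<in> FA n"
    have "fsub (g (f (fmul a x))) (g (fmul a (f x))) \<in> NIs n F"
      using g2 f1 f4 a x fmul_FA by auto
    moreover have "fsub (g (fmul a (f x))) (fmul a (g (f x))) \<in> NIs n F"
      using g4 f1 a x by auto
    ultimately show "fsub (g (f (fmul a x))) (fmul a (g (f x))) \<in> NIs n F"
      by (rule NIs_trans)
  next
    fix x assume "x \<in> FA n" "g (f x) \<in> NIs n F"
    then show "x \<in> NIs n D" using f1 f5 g5 by auto
  next
    fix y assume y: "y \<in> FA n"
    obtain x' where x': "x' \<in> FA n" "fsub (g x') y \<in> NIs n F" using g6 y by blast
    obtain x where x: "x \<in> FA n" "fsub (f x) x' \<in> NIs n E" using f6 x'(1) by blast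
    have "fsub (g (f x)) (g x') \<in> NIs n F" using g2 f1 x x' by auto
    then show "\<exists>x\<in>FA n. fsub (g (f x)) y \<in> NIs n F" using x'(2) x(1) by (blast intro: NIs_trans)
  next
    fix x assume x: "x \<in> FA n" "homog_even x"
    obtain y where y: "y \<in> FA n" "homog_even y" "fsub (f x) y \<in> NIs n E" using f7 x by blast
    obtain z where z: "z \<in> FA n" "homog_even z" "fsub (g y) z \<in> NIs n F" using g7 y by blast
    have "fsub (g (f x)) (g y) \<in> NIs n F" using g2 f1 x y by auto
    then show "\<exists>z\<in>FA n. homog_even z \<and> fsub (g (f x)) z \<in> NIs n F" using z by (blast intro: NIs_trans)
  next
    fix x assume x: "x \<in> FA n" "homog_odd x"
    obtain y where y: "y \<in> FA n" "homog_odd y" "fsub (f x) y \<in> NIs n E" using f8 x by blast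
    obtain z where z: "z \<in> FA n" "homog_odd z" "fsub (g y) z \<in> NIs n F" using g8 y by blast
    have "fsub (g (f x)) (g y) \<in> NIs n F" using g2 f1 x y by auto
    then show "\<exists>z\<in>FA n. homog_odd z \<and> fsub (g (f x)) z \<in> NIs n F" using z by (blast intro: NIs_trans)
  qed
qed

lemma comb_eqI:
  assumes "\<forall>u \<in> snd ` set (xs @ ys). comb xs u = comb ys u"
  shows "comb xs = comb ys"
proof
  fix w
  show "comb xs w = comb ys w"
  proof (cases "w \<in> snd ` set (xs @ ys)")
    case True then show ?thesis using assms by blast
  next
    case False
    then have "comb xs w = 0" "comb ys w = 0" using comb_supp by force+
    then show ?thesis by simp
  qed
qed

definition gD :: "nat set \<Rightarrow> nat \<Rightarrow> fa" where
  "gD D j = comb [(1,[T j]),(if j \<in> D then 1 else 0,[])]"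

lemma gD_NIs: "Tv n j \<Longrightarrow> gD D j \<in> NIs n D"
  unfolding gD_def by (rule NIs.gen)

definition rt :: "(complex \<times> gen list) list \<Rightarrow> fa \<Rightarrow> (complex \<times> gen list) list \<Rightarrow> fa" where
  "rt L r R = fmul (comb L) (fmul r (comb R))"

definition wordsok :: "nat \<Rightarrow> (complex \<times> gen list) list \<Rightarrow> bool" where
  "wordsok n L \<longleftrightarrow> (\<forall>(c,u)\<in>set L. set u \<subseteq> gens n)"

lemma wordsok_FA: "wordsok n L \<Longrightarrow> comb L \<in> FA n"
  unfolding wordsok_def by (rule comb_FA) auto

lemma rt_Rideal: "r \<in> Rideal n \<Longrightarrow> wordsok n L \<Longrightarrow> wordsok n R \<Longrightarrow> rt L r R \<in> Rideal n"
  unfolding rt_def by (intro Rideal.lmul Rideal.rmul wordsok_FA)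

lemma rt_comb: "rt L (comb B) R = comb (cprod L (cprod B R))"
  unfolding rt_def by (simp add: fmul_comb)

lemma rel_sq: "Cv n i \<Longrightarrow> comb [(1,[C i,C i]),(1,[])] \<in> Rideal n"
  by (rule Rideal.rel) (unfold rels_def, blast)
lemma rel_cc: "Cv n i \<Longrightarrow> Cv n j \<Longrightarrow> i \<noteq> j \<Longrightarrow> comb [(1,[C i,C j]),(1,[C j,C i])] \<in> Rideal n"
  by (rule Rideal.rel) (unfold rels_def, blast)
lemma rel_tc: "Tv n i \<Longrightarrow> Cv n j \<Longrightarrow> j \<noteq> i \<Longrightarrow> j \<noteq> i+1 \<Longrightarrow> comb [(1,[T i,C j]),(-1,[C j,T i])] \<in> Rideal n"
  by (rule Rideal.rel) (unfold rels_def, blast)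
lemma rel_t1: "Tv n i \<Longrightarrow> comb [(1,[T i,C i]),(-1,[C (i+1),T i])] \<in> Rideal n"
  by (rule Rideal.rel) (unfold rels_def, blast)
lemma rel_t2: "Tv n i \<Longrightarrow> comb [(1,[T i,C (i+1)]),(1,[C (i+1)]),(-1,[C i,T i]),(-1,[C i])] \<in> Rideal n"
  by (rule Rideal.rel) (unfold rels_def, blast)


lemma NIs_decomp: "x = fadd (fmul (comb L) g) rr \<Longrightarrow> g \<in> NIs n E \<Longrightarrow> rr \<in> Rideal n \<Longrightarrow> wordsok n L \<Longrightarrow> x \<in> NIs n E"
  by (metis NIs.add NIs.lmul NIs.ideal wordsok_FA)

lemma fadd_comb: "fadd (comb xs) (comb ys) = comb (xs @ ys)"
  by (simp add: comb_append)

lemmas comb_norm = fmul_comb rt_comb fadd_comb cprod_Cons cprod_Nil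

lemma phi_a:
  assumes a: "1 \<le> a" "a < n" and aD: "a \<in> D"
  shows "fmul (gD D a) (comb [(1,[]),(-1,[C a, C (a+1)])]) \<in> NIs n (D - {a})"
proof (rule NIs_decomp)
  show "fmul (gD D a) (comb [(1,[]),(-1,[C a, C (a+1)])]) =
    fadd (fmul (comb [(1,[]),(-1,[C (a+1), C a])]) (gD (D - {a}) a))
      (fadd (fadd (fadd (rt [(-1,[])] (comb [(1,[T a,C a]),(-1,[C (a+1),T a])]) [(1,[C (a+1)])])
                        (rt [(-1,[C (a+1)])] (comb [(1,[T a,C (a+1)]),(1,[C (a+1)]),(-1,[C a,T a]),(-1,[C a])]) [(1,[])]))
                  (rt [(1,[])] (comb [(1,[C (a+1),C (a+1)]),(1,[])]) [(1,[])]))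
            (rt [(-1,[])] (comb [(1,[C (a+1),C a]),(1,[C a,C (a+1)])]) [(1,[])]))"
    using aD unfolding gD_def
    apply (simp only: comb_norm)
    apply (rule comb_eqI)
    apply (simp add: comb_def)
    done
  show "gD (D - {a}) a \<in> NIs n (D - {a})" using a by (intro gD_NIs) (simp add: Tv_def)
  show "fadd (fadd (fadd (rt [(-1,[])] (comb [(1,[T a,C a]),(-1,[C (a+1),T a])]) [(1,[C (a+1)])])
                        (rt [(-1,[C (a+1)])] (comb [(1,[T a,C (a+1)]),(1,[C (a+1)]),(-1,[C a,T a]),(-1,[C a])]) [(1,[])]))
                  (rt [(1,[])] (comb [(1,[C (a+1),C (a+1)]),(1,[])]) [(1,[])]))
            (rt [(-1,[])] (comb [(1,[C (a+1),C a]),(1,[C a,C (a+1)])]) [(1,[])]) \<in> Rideal n"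
    using a by (intro Rideal.add rt_Rideal rel_t1 rel_t2 rel_sq rel_cc) (auto simp: Tv_def Cv_def wordsok_def)
  show "wordsok n [(1,[]),(-1,[C (a+1), C a])]" using a by (auto simp: Cv_def wordsok_def)
qed


lemma psi_a:
  assumes a: "1 \<le> a" "a < n" and aD: "a \<in> D"
  shows "fmul (gD (D - {a}) a) (comb [(1/2,[]),(1/2,[C a, C (a+1)])]) \<in> NIs n D"
proof (rule NIs_decomp)
  show "fmul (gD (D - {a}) a) (comb [(1/2,[]),(1/2,[C a, C (a+1)])]) =
    fadd (fmul (comb [(1/2,[]),(1/2,[C (a+1), C a])]) (gD D a))
      (fadd (fadd (rt [(1/2,[])] (comb [(1,[T a,C a]),(-1,[C (a+1),T a])]) [(1,[C (a+1)])])
                  (rt [(1/2,[C (a+1)])] (comb [(1,[T a,C (a+1)]),(1,[C (a+1)]),(-1,[C a,T a]),(-1,[C a])]) [(1,[])]))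
            (rt [(-1/2,[])] (comb [(1,[C (a+1),C (a+1)]),(1,[])]) [(1,[])]))"
    using aD unfolding gD_def
    apply (simp only: comb_norm)
    apply (rule comb_eqI)
    apply (simp add: comb_def)
    done
  show "gD D a \<in> NIs n D" using a by (intro gD_NIs) (simp add: Tv_def)
  show "fadd (fadd (rt [(1/2,[])] (comb [(1,[T a,C a]),(-1,[C (a+1),T a])]) [(1,[C (a+1)])])
                  (rt [(1/2,[C (a+1)])] (comb [(1,[T a,C (a+1)]),(1,[C (a+1)]),(-1,[C a,T a]),(-1,[C a])]) [(1,[])]))
            (rt [(-1/2,[])] (comb [(1,[C (a+1),C (a+1)]),(1,[])]) [(1,[])]) \<in> Rideal n"
    using a by (intro Rideal.add rt_Rideal rel_t1 rel_t2 rel_sq) (auto simp: Tv_def Cv_def wordsok_def)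
  show "wordsok n [(1/2,[]),(1/2,[C (a+1), C a])]" using a by (auto simp: Cv_def wordsok_def)
qed

lemma rel_t2m: "Tv n (a-1) \<Longrightarrow> 1 \<le> a \<Longrightarrow> comb [(1,[T (a-1),C a]),(1,[C a]),(-1,[C (a-1),T (a-1)]),(-1,[C (a-1)])] \<in> Rideal n"
  using rel_t2[of n "a-1"] by simp

lemma phi_am:
  assumes a: "2 \<le> a" "a < n" and aD: "a - 1 \<in> D"
  shows "fmul (gD D (a-1)) (comb [(1,[]),(-1,[C a, C (a+1)])]) \<in> NIs n (D - {a})"
proof (rule NIs_decomp)
  show "fmul (gD D (a-1)) (comb [(1,[]),(-1,[C a, C (a+1)])]) =
    fadd (fmul (comb [(1,[]),(-1,[C (a-1), C (a+1)])]) (gD (D - {a}) (a-1)))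
      (fadd (rt [(-1,[])] (comb [(1,[T (a-1),C a]),(1,[C a]),(-1,[C (a-1),T (a-1)]),(-1,[C (a-1)])]) [(1,[C (a+1)])])
            (rt [(-1,[C (a-1)])] (comb [(1,[T (a-1),C (a+1)]),(-1,[C (a+1),T (a-1)])]) [(1,[])]))"
    using aD a unfolding gD_def
    apply (simp only: comb_norm)
    apply (rule comb_eqI)
    apply (simp add: comb_def)
    done
  show "gD (D - {a}) (a-1) \<in> NIs n (D - {a})" using a by (intro gD_NIs) (simp add: Tv_def, linarith)
  show "fadd (rt [(-1,[])] (comb [(1,[T (a-1),C a]),(1,[C a]),(-1,[C (a-1),T (a-1)]),(-1,[C (a-1)])]) [(1,[C (a+1)])])
            (rt [(-1,[C (a-1)])] (comb [(1,[T (a-1),C (a+1)]),(-1,[C (a+1),T (a-1)])]) [(1,[])]) \<in> Rideal n"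
    using a by (intro Rideal.add rt_Rideal rel_t2m rel_tc) (auto simp: Tv_def Cv_def wordsok_def)
  show "wordsok n [(1,[]),(-1,[C (a-1), C (a+1)])]" using a by (auto simp: Cv_def wordsok_def)
qed

lemma psi_am:
  assumes a: "2 \<le> a" "a < n" and aD: "a - 1 \<in> D"
  shows "fmul (gD (D - {a}) (a-1)) (comb [(1/2,[]),(1/2,[C a, C (a+1)])]) \<in> NIs n D"
proof (rule NIs_decomp)
  show "fmul (gD (D - {a}) (a-1)) (comb [(1/2,[]),(1/2,[C a, C (a+1)])]) =
    fadd (fmul (comb [(1/2,[]),(1/2,[C (a-1), C (a+1)])]) (gD D (a-1)))
      (fadd (rt [(1/2,[])] (comb [(1,[T (a-1),C a]),(1,[C a]),(-1,[C (a-1),T (a-1)]),(-1,[C (a-1)])]) [(1,[C (a+1)])])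
            (rt [(1/2,[C (a-1)])] (comb [(1,[T (a-1),C (a+1)]),(-1,[C (a+1),T (a-1)])]) [(1,[])]))"
    using aD a unfolding gD_def
    apply (simp only: comb_norm)
    apply (rule comb_eqI)
    apply (simp add: comb_def)
    done
  show "gD D (a-1) \<in> NIs n D" using a by (intro gD_NIs) (simp add: Tv_def, linarith)
  show "fadd (rt [(1/2,[])] (comb [(1,[T (a-1),C a]),(1,[C a]),(-1,[C (a-1),T (a-1)]),(-1,[C (a-1)])]) [(1,[C (a+1)])])
            (rt [(1/2,[C (a-1)])] (comb [(1,[T (a-1),C (a+1)]),(-1,[C (a+1),T (a-1)])]) [(1,[])]) \<in> Rideal n"
    using a by (intro Rideal.add rt_Rideal rel_t2m rel_tc) (auto simp: Tv_def Cv_def wordsok_def)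
  show "wordsok n [(1/2,[]),(1/2,[C (a-1), C (a+1)])]" using a by (auto simp: Cv_def wordsok_def)
qed

lemma phi_ap:
  assumes a: "1 \<le> a" "a + 1 < n" and aD: "a + 1 \<notin> D"
  shows "fmul (gD D (a+1)) (comb [(1,[]),(-1,[C a, C (a+1)])]) \<in> NIs n (D - {a})"
proof (rule NIs_decomp)
  show "fmul (gD D (a+1)) (comb [(1,[]),(-1,[C a, C (a+1)])]) =
    fadd (fmul (comb [(1,[]),(-1,[C a, C (a+1+1)])]) (gD (D - {a}) (a+1)))
      (fadd (rt [(-1,[])] (comb [(1,[T (a+1),C a]),(-1,[C a,T (a+1)])]) [(1,[C (a+1)])])
            (rt [(-1,[C a])] (comb [(1,[T (a+1),C (a+1)]),(-1,[C (a+1+1),T (a+1)])]) [(1,[])]))"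
    using aD a unfolding gD_def
    apply (simp only: comb_norm)
    apply (rule comb_eqI)
    apply (simp add: comb_def)
    done
  show "gD (D - {a}) (a+1) \<in> NIs n (D - {a})" using a by (intro gD_NIs) (simp add: Tv_def)
  show "fadd (rt [(-1,[])] (comb [(1,[T (a+1),C a]),(-1,[C a,T (a+1)])]) [(1,[C (a+1)])])
            (rt [(-1,[C a])] (comb [(1,[T (a+1),C (a+1)]),(-1,[C (a+1+1),T (a+1)])]) [(1,[])]) \<in> Rideal n"
    using a by (intro Rideal.add rt_Rideal rel_t1 rel_tc) (auto simp: Tv_def Cv_def wordsok_def)
  show "wordsok n [(1,[]),(-1,[C a, C (a+1+1)])]" using a by (auto simp: Cv_def wordsok_def)
qed

lemma psi_ap:
  assumes a: "1 \<le> a" "a + 1 < n" and aD: "a + 1 \<notin> D"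
  shows "fmul (gD (D - {a}) (a+1)) (comb [(1/2,[]),(1/2,[C a, C (a+1)])]) \<in> NIs n D"
proof (rule NIs_decomp)
  show "fmul (gD (D - {a}) (a+1)) (comb [(1/2,[]),(1/2,[C a, C (a+1)])]) =
    fadd (fmul (comb [(1/2,[]),(1/2,[C a, C (a+1+1)])]) (gD D (a+1)))
      (fadd (rt [(1/2,[])] (comb [(1,[T (a+1),C a]),(-1,[C a,T (a+1)])]) [(1,[C (a+1)])])
            (rt [(1/2,[C a])] (comb [(1,[T (a+1),C (a+1)]),(-1,[C (a+1+1),T (a+1)])]) [(1,[])]))"
    using aD a unfolding gD_def
    apply (simp only: comb_norm)
    apply (rule comb_eqI)
    apply (simp add: comb_def)
    done
  show "gD D (a+1) \<in> NIs n D" using a by (intro gD_NIs) (simp add: Tv_def)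
  show "fadd (rt [(1/2,[])] (comb [(1,[T (a+1),C a]),(-1,[C a,T (a+1)])]) [(1,[C (a+1)])])
            (rt [(1/2,[C a])] (comb [(1,[T (a+1),C (a+1)]),(-1,[C (a+1+1),T (a+1)])]) [(1,[])]) \<in> Rideal n"
    using a by (intro Rideal.add rt_Rideal rel_t1 rel_tc) (auto simp: Tv_def Cv_def wordsok_def)
  show "wordsok n [(1/2,[]),(1/2,[C a, C (a+1+1)])]" using a by (auto simp: Cv_def wordsok_def)
qed

lemma phi_oth:
  assumes a: "1 \<le> a" "a < n" and j: "Tv n j" "j \<noteq> a" "j \<noteq> a - 1" "j \<noteq> a + 1"
  shows "fmul (gD D j) (comb [(1,[]),(-1,[C a, C (a+1)])]) \<in> NIs n (D - {a})"
proof (rule NIs_decomp)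
  show "fmul (gD D j) (comb [(1,[]),(-1,[C a, C (a+1)])]) =
    fadd (fmul (comb [(1,[]),(-1,[C a, C (a+1)])]) (gD (D - {a}) j))
      (fadd (rt [(-1,[])] (comb [(1,[T j,C a]),(-1,[C a,T j])]) [(1,[C (a+1)])])
            (rt [(-1,[C a])] (comb [(1,[T j,C (a+1)]),(-1,[C (a+1),T j])]) [(1,[])]))"
    using a j unfolding gD_def
    apply (simp only: comb_norm)
    apply (rule comb_eqI)
    apply (cases "j \<in> D")
    apply (simp_all add: comb_def)
    done
  show "gD (D - {a}) j \<in> NIs n (D - {a})" using j by (intro gD_NIs)
  show "fadd (rt [(-1,[])] (comb [(1,[T j,C a]),(-1,[C a,T j])]) [(1,[C (a+1)])])
            (rt [(-1,[C a])] (comb [(1,[T j,C (a+1)]),(-1,[C (a+1),T j])]) [(1,[])]) \<in> Rideal n"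
    using a j by (intro Rideal.add rt_Rideal rel_tc) (auto simp: Tv_def Cv_def wordsok_def)
  show "wordsok n [(1,[]),(-1,[C a, C (a+1)])]" using a by (auto simp: Cv_def wordsok_def)
qed

lemma psi_oth:
  assumes a: "1 \<le> a" "a < n" and j: "Tv n j" "j \<noteq> a" "j \<noteq> a - 1" "j \<noteq> a + 1"
  shows "fmul (gD (D - {a}) j) (comb [(1/2,[]),(1/2,[C a, C (a+1)])]) \<in> NIs n D"
proof (rule NIs_decomp)
  show "fmul (gD (D - {a}) j) (comb [(1/2,[]),(1/2,[C a, C (a+1)])]) =
    fadd (fmul (comb [(1/2,[]),(1/2,[C a, C (a+1)])]) (gD D j))
      (fadd (rt [(1/2,[])] (comb [(1,[T j,C a]),(-1,[C a,T j])]) [(1,[C (a+1)])])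
            (rt [(1/2,[C a])] (comb [(1,[T j,C (a+1)]),(-1,[C (a+1),T j])]) [(1,[])]))"
    using a j unfolding gD_def
    apply (simp only: comb_norm)
    apply (rule comb_eqI)
    apply (cases "j \<in> D")
    apply (simp_all add: comb_def)
    done
  show "gD D j \<in> NIs n D" using j by (intro gD_NIs)
  show "fadd (rt [(1/2,[])] (comb [(1,[T j,C a]),(-1,[C a,T j])]) [(1,[C (a+1)])])
            (rt [(1/2,[C a])] (comb [(1,[T j,C (a+1)]),(-1,[C (a+1),T j])]) [(1,[])]) \<in> Rideal n"
    using a j by (intro Rideal.add rt_Rideal rel_tc) (auto simp: Tv_def Cv_def wordsok_def)
  show "wordsok n [(1/2,[]),(1/2,[C a, C (a+1)])]" using a by (auto simp: Cv_def wordsok_def)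
qed

lemma fsub_comb: "fsub (comb xs) (comb ys) = comb (xs @ map (\<lambda>(c,u). (-c,u)) ys)"
proof
  fix w show "fsub (comb xs) (comb ys) w = comb (xs @ map (\<lambda>(c,u). (-c,u)) ys) w"
    by (induction ys) (auto simp: fsub_def comb_def split: prod.splits)
qed

lemma uw_one:
  assumes a: "1 \<le> a" "a < n"
  shows "fsub (fmul (comb [(1,[]),(-1,[C a, C (a+1)])]) (comb [(1/2,[]),(1/2,[C a, C (a+1)])])) one \<in> Rideal n"
    and "fsub (fmul (comb [(1/2,[]),(1/2,[C a, C (a+1)])]) (comb [(1,[]),(-1,[C a, C (a+1)])])) one \<in> Rideal n"
proof -
  let ?rr = "fadd (fadd (rt [(-1/2,[C a])] (comb [(1,[C a,C (a+1)]),(1,[C (a+1),C a])]) [(1,[C (a+1)])])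
                   (rt [(1/2,[])] (comb [(1,[C a,C a]),(1,[])]) [(1,[C (a+1), C (a+1)])]))
             (rt [(-1/2,[])] (comb [(1,[C (a+1),C (a+1)]),(1,[])]) [(1,[])])"
  have r: "?rr \<in> Rideal n"
    using a by (intro Rideal.add rt_Rideal rel_cc rel_sq) (auto simp: Tv_def Cv_def wordsok_def)
  have "fsub (fmul (comb [(1,[]),(-1,[C a, C (a+1)])]) (comb [(1/2,[]),(1/2,[C a, C (a+1)])])) one = ?rr"
    unfolding one_def
    apply (simp only: comb_norm fsub_comb)
    apply (rule comb_eqI)
    apply (simp add: comb_def)
    done
  then show "fsub (fmul (comb [(1,[]),(-1,[C a, C (a+1)])]) (comb [(1/2,[]),(1/2,[C a, C (a+1)])])) one \<in> Rideal n"
    using r by simp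
  have "fsub (fmul (comb [(1/2,[]),(1/2,[C a, C (a+1)])]) (comb [(1,[]),(-1,[C a, C (a+1)])])) one = ?rr"
    unfolding one_def
    apply (simp only: comb_norm fsub_comb)
    apply (rule comb_eqI)
    apply (simp add: comb_def)
    done
  then show "fsub (fmul (comb [(1/2,[]),(1/2,[C a, C (a+1)])]) (comb [(1,[]),(-1,[C a, C (a+1)])])) one \<in> Rideal n"
    using r by simp
qed

lemma map_NIs:
  assumes u: "u \<in> FA n" and g: "\<And>j. Tv n j \<Longrightarrow> fmul (gD D j) u \<in> NIs n E"
  shows "x \<in> NIs n D \<Longrightarrow> fmul x u \<in> NIs n E"
proof (induction rule: NIs.induct)
  case (ideal x) then show ?case by (intro NIs.ideal Rideal.rmul u)
next
  case (gen j) then show ?case using g unfolding gD_def by blast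
next
  case (add x y) then show ?case by (simp add: fmul_fadd_left NIs.add)
next
  case (lmul a x)
  have xF: "x \<in> FA n" using lmul.hyps(2) by (rule NIs_FA)
  have "fmul (fmul a x) u = fmul a (fmul x u)"
    by (rule fmul_assoc[OF FA_fin[OF lmul.hyps(1)] FA_fin[OF xF] FA_fin[OF u]])
  then show ?case using lmul by (simp add: NIs.lmul)
qed

lemma fmul_nz:
  assumes "fmul p q w \<noteq> 0"
  shows "\<exists>k\<le>length w. p (take k w) \<noteq> 0 \<and> q (drop k w) \<noteq> 0"
proof (rule ccontr)
  assume "\<not> ?thesis"
  then have "\<forall>k\<in>{..length w}. p (take k w) * q (drop k w) = 0" by auto
  then have "fmul p q w = 0" unfolding fmul_def by (rule sum.neutral)
  then show False using assms by simp
qed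

lemma nC_append[simp]: "nC (u @ v) = nC u + nC v"
  by (simp add: nC_def)

lemma homog_even_mul: "homog_even p \<Longrightarrow> homog_even q \<Longrightarrow> homog_even (fmul p q)"
  unfolding homog_even_def
proof (intro allI impI)
  fix w assume p: "\<forall>w. p w \<noteq> 0 \<longrightarrow> even (nC w)" and q: "\<forall>w. q w \<noteq> 0 \<longrightarrow> even (nC w)"
    and w: "fmul p q w \<noteq> 0"
  obtain k where "p (take k w) \<noteq> 0" "q (drop k w) \<noteq> 0" using fmul_nz[OF w] by blast
  then have "even (nC (take k w))" "even (nC (drop k w))" using p q by auto
  moreover have "nC w = nC (take k w) + nC (drop k w)" by (metis append_take_drop_id nC_append)
  ultimately show "even (nC w)" by simp
qed

lemma homog_odd_mul: "homog_odd p \<Longrightarrow> homog_even q \<Longrightarrow> homog_odd (fmul p q)"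
  unfolding homog_even_def homog_odd_def
proof (intro allI impI)
  fix w assume p: "\<forall>w. p w \<noteq> 0 \<longrightarrow> odd (nC w)" and q: "\<forall>w. q w \<noteq> 0 \<longrightarrow> even (nC w)"
    and w: "fmul p q w \<noteq> 0"
  obtain k where "p (take k w) \<noteq> 0" "q (drop k w) \<noteq> 0" using fmul_nz[OF w] by blast
  then have "odd (nC (take k w))" "even (nC (drop k w))" using p q by auto
  moreover have "nC w = nC (take k w) + nC (drop k w)" by (metis append_take_drop_id nC_append)
  ultimately show "odd (nC w)" by simp
qed

lemma iso_units:
  assumes u: "u \<in> FA n" and w: "w \<in> FA n" and ue: "homog_even u"
    and hu: "\<And>x. x \<in> NIs n D \<Longrightarrow> fmul x u \<in> NIs n E"
    and hw: "\<And>x. x \<in> NIs n E \<Longrightarrow> fmul x w \<in> NIs n D"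
    and uw: "fsub (fmul u w) one \<in> Rideal n"
    and wu: "fsub (fmul w u) one \<in> Rideal n"
  shows "siso n D E"
  unfolding siso_def
proof (rule exI[of _ "\<lambda>x. fmul x u"], intro conjI ballI impI)
  fix x assume "x \<in> FA n" then show "fmul x u \<in> FA n" using u by (rule fmul_FA)
next
  fix x y assume "x \<in> FA n" "y \<in> FA n" "fsub x y \<in> NIs n D"
  then show "fsub (fmul x u) (fmul y u) \<in> NIs n E" using hu[of "fsub x y"] by (simp add: fmul_fsub_left)
next
  fix x y assume "x \<in> FA n" "y \<in> FA n"
  then show "fsub (fmul (fadd x y) u) (fadd (fmul x u) (fmul y u)) \<in> NIs n E"
    by (simp add: fmul_fadd_left NIs_refl)
next
  fix a x assume a: "a \<in> FA n" and x: "x \<in> FA n"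
  have "fmul (fmul a x) u = fmul a (fmul x u)" by (rule fmul_assoc[OF FA_fin[OF a] FA_fin[OF x] FA_fin[OF u]])
  then show "fsub (fmul (fmul a x) u) (fmul a (fmul x u)) \<in> NIs n E" by (simp add: NIs_refl)
next
  fix x assume x: "x \<in> FA n" and xu: "fmul x u \<in> NIs n E"
  have "fmul (fmul x u) w \<in> NIs n D" using hw[OF xu] .
  moreover have "fmul (fmul x u) w = fmul x (fmul u w)" by (rule fmul_assoc[OF FA_fin[OF x] FA_fin[OF u] FA_fin[OF w]])
  ultimately have 1: "fmul x (fmul u w) \<in> NIs n D" by simp
  have "fsub (fmul x (fmul u w)) x = fmul x (fsub (fmul u w) one)"
    by (simp add: fmul_fsub_right)
  also have "\<dots> \<in> Rideal n" using x uw by (rule Rideal.lmul)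
  finally have "fsub x (fmul x (fmul u w)) \<in> NIs n D" by (rule NIs_sym[OF NIs.ideal])
  then show "x \<in> NIs n D" using 1 by (rule NIs_fsub_mem)
next
  fix y assume y: "y \<in> FA n"
  have xf: "fmul y w \<in> FA n" using y w by (rule fmul_FA)
  have "fmul (fmul y w) u = fmul y (fmul w u)" by (rule fmul_assoc[OF FA_fin[OF y] FA_fin[OF w] FA_fin[OF u]])
  then have "fsub (fmul (fmul y w) u) y = fmul y (fsub (fmul w u) one)"
    by (simp add: fmul_fsub_right)
  also have "\<dots> \<in> Rideal n" using y wu by (rule Rideal.lmul)
  finally have "fsub (fmul (fmul y w) u) y \<in> NIs n E" by (rule NIs.ideal)
  then show "\<exists>x\<in>FA n. fsub (fmul x u) y \<in> NIs n E" using xf by blast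
next
  fix x assume "x \<in> FA n" "homog_even x"
  then show "\<exists>y\<in>FA n. homog_even y \<and> fsub (fmul x u) y \<in> NIs n E"
    using u ue by (intro bexI[of _ "fmul x u"]) (auto simp: NIs_refl homog_even_mul fmul_FA)
next
  fix x assume "x \<in> FA n" "homog_odd x"
  then show "\<exists>y\<in>FA n. homog_odd y \<and> fsub (fmul x u) y \<in> NIs n E"
    using u ue by (intro bexI[of _ "fmul x u"]) (auto simp: NIs_refl homog_odd_mul fmul_FA)
qed

lemma homog_even_cc: "homog_even (comb [(x,[]),(y,[C a, C b])])"
  unfolding homog_even_def
proof (intro allI impI)
  fix w assume "comb [(x,[]),(y,[C a, C b])] w \<noteq> 0"
  then have "w \<in> snd ` set [(x,[]),(y,[C a, C b])]" by (rule comb_supp)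
  then have "w = [] \<or> w = [C a, C b]" by auto
  then show "even (nC w)" by (auto simp: nC_def)
qed

lemma move_iso:
  assumes a: "1 \<le> a" "a < n" and aD: "a \<in> D" "a + 1 \<notin> D" "a = 1 \<or> a - 1 \<in> D"
  shows "siso n D (D - {a})" "siso n (D - {a}) D"
proof -
  define u where "u = comb [(1,[]),(-1,[C a, C (a+1)])]"
  define w where "w = comb [(1/2,[]),(1/2,[C a, C (a+1)])]"
  have uF: "u \<in> FA n" unfolding u_def using a by (intro comb_FA) (auto simp: Cv_def)
  have wF: "w \<in> FA n" unfolding w_def using a by (intro comb_FA) (auto simp: Cv_def)
  have ue: "homog_even u" "homog_even w" unfolding u_def w_def by (rule homog_even_cc)+
  have gu: "fmul (gD D j) u \<in> NIs n (D - {a})" if j: "Tv n j" for j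
  proof -
    consider "j = a" | "j = a - 1" "j \<noteq> a" | "j = a + 1" | "j \<noteq> a" "j \<noteq> a - 1" "j \<noteq> a + 1" by blast
    then show ?thesis
    proof cases
      case 1 then show ?thesis unfolding u_def using phi_a[OF a aD(1)] by simp
    next
      case 2
      then have "2 \<le> a" "a - 1 \<in> D" using j aD(3) by (auto simp: Tv_def)
      then show ?thesis unfolding u_def 2(1) using phi_am[OF _ a(2)] by simp
    next
      case 3
      then have "a + 1 < n" using j by (auto simp: Tv_def)
      then show ?thesis unfolding u_def 3 using phi_ap[OF a(1) _ aD(2)] by simp
    next
      case 4 then show ?thesis unfolding u_def using phi_oth[OF a j] by simp
    qed
  qed
  have gw: "fmul (gD (D - {a}) j) w \<in> NIs n D" if j: "Tv n j" for j
  proof -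
    consider "j = a" | "j = a - 1" "j \<noteq> a" | "j = a + 1" | "j \<noteq> a" "j \<noteq> a - 1" "j \<noteq> a + 1" by blast
    then show ?thesis
    proof cases
      case 1 then show ?thesis unfolding w_def using psi_a[OF a aD(1)] by simp
    next
      case 2
      then have "2 \<le> a" "a - 1 \<in> D" using j aD(3) by (auto simp: Tv_def)
      then show ?thesis unfolding w_def 2(1) using psi_am[OF _ a(2)] by simp
    next
      case 3
      then have "a + 1 < n" using j by (auto simp: Tv_def)
      then show ?thesis unfolding w_def 3 using psi_ap[OF a(1) _ aD(2)] by simp
    next
      case 4 then show ?thesis unfolding w_def using psi_oth[OF a j] by simp
    qed
  qed
  have hu: "\<And>x. x \<in> NIs n D \<Longrightarrow> fmul x u \<in> NIs n (D - {a})" by (rule map_NIs[OF uF gu])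
  have hw: "\<And>x. x \<in> NIs n (D - {a}) \<Longrightarrow> fmul x w \<in> NIs n D" by (rule map_NIs[OF wF gw])
  have uw: "fsub (fmul u w) one \<in> Rideal n" "fsub (fmul w u) one \<in> Rideal n"
    unfolding u_def w_def using uw_one[OF a] by auto
  show "siso n D (D - {a})" by (rule iso_units[OF uF wF ue(1) hu hw uw])
  show "siso n (D - {a}) D" by (rule iso_units[OF wF uF ue(2) hw hu uw(2) uw(1)])
qed

definition Lam :: "nat set \<Rightarrow> nat set" where
  "Lam D = {a \<in> D. a \<noteq> 1 \<and> a - 1 \<notin> D}"

lemma HP_Lam: "HP I = Lam (Des I)"
  by (simp add: HP_def Lam_def)

lemma siso_Lam:
  "finite D \<Longrightarrow> D \<subseteq> {1..<n} \<Longrightarrow> siso n D (Lam D) \<and> siso n (Lam D) D"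
proof (induction "card D" arbitrary: D rule: less_induct)
  case less
  show ?case
  proof (cases "Lam D = D")
    case True then show ?thesis by (simp add: siso_refl)
  next
    case False
    define NP where "NP = {a \<in> D. a = 1 \<or> a - 1 \<in> D}"
    have "NP \<noteq> {}" using False unfolding NP_def Lam_def by auto
    moreover have fNP: "finite NP" using less.prems(1) unfolding NP_def by auto
    ultimately have MNP: "Max NP \<in> NP" by (rule Max_in[rotated])
    define M where "M = Max NP"
    have MD: "M \<in> D" "M = 1 \<or> M - 1 \<in> D" using MNP unfolding M_def NP_def by auto
    have M1: "1 \<le> M" "M < n" using MD less.prems(2) by auto
    have MS: "M + 1 \<notin> D"
    proof
      assume "M + 1 \<in> D"
      then have "M + 1 \<in> NP" using MD unfolding NP_def by auto
      then have "M + 1 \<le> M" unfolding M_def using fNP by (simp add: Max_ge)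
      then show False by simp
    qed
    have LL: "Lam (D - {M}) = Lam D"
    proof
      show "Lam (D - {M}) \<subseteq> Lam D"
      proof
        fix x assume x: "x \<in> Lam (D - {M})"
        then have "x \<in> D" "x \<noteq> M" "x \<noteq> 1" "x - 1 \<notin> D - {M}" unfolding Lam_def by auto
        moreover have "x - 1 \<noteq> M"
        proof
          assume "x - 1 = M"
          then have "x = M + 1" using M1 by auto
          then show False using \<open>x \<in> D\<close> MS by simp
        qed
        ultimately show "x \<in> Lam D" unfolding Lam_def by auto
      qed
      show "Lam D \<subseteq> Lam (D - {M})"
      proof
        fix x assume x: "x \<in> Lam D"
        then have "x \<noteq> M" using MD unfolding Lam_def by auto
        then show "x \<in> Lam (D - {M})" using x unfolding Lam_def by auto
      qed
    qed
    have "card (D - {M}) < card D" using MD(1) less.prems(1) by (meson card_Diff1_less)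
    then have IH: "siso n (D - {M}) (Lam D) \<and> siso n (Lam D) (D - {M})"
      using less.hyps[of "D - {M}"] less.prems LL by auto
    have mv: "siso n D (D - {M})" "siso n (D - {M}) D" using move_iso[OF M1 MD(1) MS MD(2)] by auto
    show ?thesis using IH mv siso_trans by blast
  qed
qed

lemma pos_sum_list: "(\<forall>i\<in>set xs. (0::nat) < i) \<Longrightarrow> xs \<noteq> [] \<Longrightarrow> 0 < sum_list xs"
  by (induction xs) auto

lemma Des_sub:
  assumes "composition n I"
  shows "Des I \<subseteq> {1..<n}"
proof
  fix x assume "x \<in> Des I"
  then obtain k where k: "x = sum_list (take k I)" "0 < k" "k < length I" unfolding Des_def by auto
  have pos: "\<forall>i\<in>set I. 0 < i" and sm: "sum_list I = n" using assms unfolding composition_def by auto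
  have "0 < sum_list (take k I)" using pos k by (intro pos_sum_list) (auto dest: in_set_takeD)
  moreover have "0 < sum_list (drop k I)" using pos k by (intro pos_sum_list) (auto dest: in_set_dropD)
  moreover have "sum_list (take k I) + sum_list (drop k I) = n"
    using sm by (metis append_take_drop_id sum_list_append)
  ultimately show "x \<in> {1..<n}" using k(1) by auto
qed

lemma dir_back:
  assumes "composition n I" "composition n J" "HP I = HP J"
  shows "super_iso n I J"
proof -
  have sI: "Des I \<subseteq> {1..<n}" "finite (Des I)" using Des_sub[OF assms(1)] finite_subset by auto
  have sJ: "Des J \<subseteq> {1..<n}" "finite (Des J)" using Des_sub[OF assms(2)] finite_subset by auto
  have "siso n (Des I) (Lam (Des I))" using siso_Lam[OF sI(2) sI(1)] by blast
  moreover have "siso n (Lam (Des J)) (Des J)" using siso_Lam[OF sJ(2) sJ(1)] by blast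
  moreover have "Lam (Des I) = Lam (Des J)" using assms(3) by (simp add: HP_Lam)
  ultimately show ?thesis unfolding super_iso_sup using siso_trans by metis
qed

type_synonym vec = "nat set \<Rightarrow> complex"

definition upd :: "nat set \<Rightarrow> nat \<Rightarrow> bool \<Rightarrow> nat set" where
  "upd X k b = (if b then insert k X else X - {k})"

lemma mem_upd[simp]: "x \<in> upd X k b \<longleftrightarrow> (if x = k then b else x \<in> X)"
  by (auto simp: upd_def)

lemma upd_upd_same[simp]: "upd (upd X k b) k b' = upd X k b'"
  by (auto simp: upd_def)

lemma upd_comm: "k \<noteq> k' \<Longrightarrow> upd (upd X k b) k' b' = upd (upd X k' b') k b"
  by (auto simp: upd_def)

lemma upd_triv[simp]: "(k \<in> X) = b \<Longrightarrow> upd X k b = X"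
  by (auto simp: upd_def)

definition Top :: "complex \<Rightarrow> nat \<Rightarrow> vec \<Rightarrow> vec" where
  "Top l i f X = (if i \<in> X then (if Suc i \<in> X then -(l+1) * f X
        else (l+1) * f (upd (upd X i False) (Suc i) True))
     else (if Suc i \<in> X then l * f (upd (upd X (Suc i) False) i True) - f X
        else l * f X + f (upd (upd X i True) (Suc i) True)))"

definition par :: "nat \<Rightarrow> nat set \<Rightarrow> complex" where
  "par j Y = (-1) ^ card {d\<in>Y. d < j}"

definition Cop :: "nat \<Rightarrow> vec \<Rightarrow> vec" where
  "Cop j f X = (if j \<in> X then par j X * f (upd X j False) else - par j X * f (upd X j True))"

lemma card_lt_insert: "(k::nat) < j \<Longrightarrow> k \<notin> Y \<Longrightarrow> card {d \<in> insert k Y. d < j} = Suc (card {d\<in>Y. d < j})"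
proof -
  assume "k < j" "k \<notin> Y"
  then have "{d \<in> insert k Y. d < j} = insert k {d\<in>Y. d < j}" by auto
  moreover have "finite {d\<in>Y. d < j}" by (rule finite_subset[of _ "{..<j}"]) auto
  ultimately show ?thesis using \<open>k \<notin> Y\<close> by simp
qed

lemma par_upd[simp]: "par j (upd Y k b) = (if k < j \<and> (k \<in> Y) \<noteq> b then - par j Y else par j Y)"
proof (cases "k < j \<and> (k \<in> Y) \<noteq> b")
  case True
  show ?thesis
  proof (cases b)
    case b: True
    then have "k \<notin> Y" using True by auto
    then have "card {d \<in> insert k Y. d < j} = Suc (card {d\<in>Y. d < j})" using True by (intro card_lt_insert) auto
    then show ?thesis using True b unfolding upd_def par_def by (simp only: if_True power_Suc) simp
  next
    case b: False
    then have kY: "k \<in> Y" using True by auto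
    have e: "{d\<in>Y. d < j} = insert k {d\<in>Y - {k}. d < j}" using kY True by auto
    have "finite {d\<in>Y - {k}. d < j}" by (rule finite_subset[of _ "{..<j}"]) auto
    then have "card {d\<in>Y. d < j} = Suc (card {d\<in>Y - {k}. d < j})" unfolding e by simp
    then have "par j Y = - par j (Y - {k})" unfolding par_def by simp
    then show ?thesis using True b by (simp add: upd_def)
  qed
next
  case False
  then have "{d \<in> upd Y k b. d < j} = {d\<in>Y. d < j}" by (auto simp: upd_def)
  then show ?thesis using False by (simp add: par_def)
qed

lemma par_Suc: "par (Suc j) Y = (if j \<in> Y then - par j Y else par j Y)"
proof -
  have "{d\<in>Y. d < Suc j} = (if j \<in> Y then insert j {d\<in>Y. d < j} else {d\<in>Y. d < j})" by (auto simp: less_Suc_eq)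
  moreover have "finite {d\<in>Y. d < j}" by (rule finite_subset[of _ "{..<j}"]) auto
  ultimately show ?thesis by (simp add: par_def)
qed

lemma T_sq: "l = 0 \<or> l = -1 \<Longrightarrow> Top l i (Top l i f) X = - Top l i f X"
  by (auto simp: Top_def upd_comm algebra_simps)


lemma par_sq[simp]: "par j X * par j X = 1"
  by (simp add: par_def power_mult_distrib[symmetric] flip: power_add mult_2)

lemma C_sq: "Cop j (Cop j f) X = - f X"
  by (auto simp: Cop_def)

lemma C_anti: "i \<noteq> j \<Longrightarrow> Cop i (Cop j f) X = - Cop j (Cop i f) X"
  by (auto simp: Cop_def upd_comm)

lemma TC1: "Top l i (Cop i f) X = Cop (Suc i) (Top l i f) X"
  by (auto simp: Top_def Cop_def upd_comm par_Suc algebra_simps)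

lemma TC2: "Top l i (Cop (Suc i) f) X + Cop (Suc i) f X - Cop i (Top l i f) X - Cop i f X = 0"
  by (auto simp: Top_def Cop_def upd_comm par_Suc algebra_simps)

lemma T_comm: "Suc i < j \<Longrightarrow> Top l i (Top m j f) X = Top m j (Top l i f) X"
  by (auto simp: Top_def upd_comm algebra_simps)

lemma TC_comm: "j \<noteq> i \<Longrightarrow> j \<noteq> Suc i \<Longrightarrow> Top l i (Cop j f) X = Cop j (Top l i f) X"
  by (auto simp: Top_def Cop_def upd_comm algebra_simps)

lemma braid: "l = 0 \<or> l = -1 \<Longrightarrow> m = 0 \<or> m = -1 \<Longrightarrow>
   Top l i (Top m (Suc i) (Top l i f)) X = Top m (Suc i) (Top l i (Top m (Suc i) f)) X"
  by (auto simp: Top_def upd_comm algebra_simps)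

definition lam :: "nat set \<Rightarrow> nat \<Rightarrow> complex" where
  "lam E i = (if i \<in> E then -1 else 0)"

lemma lam_cases: "lam E i = 0 \<or> lam E i = -1"
  by (simp add: lam_def)

fun gop :: "nat set \<Rightarrow> gen \<Rightarrow> vec \<Rightarrow> vec" where
  "gop E (T i) = Top (lam E i) i"
| "gop E (C j) = Cop j"

fun wop :: "nat set \<Rightarrow> gen list \<Rightarrow> vec \<Rightarrow> vec" where
  "wop E [] f = f"
| "wop E (g # w) f = gop E g (wop E w f)"

lemma wop_append: "wop E (u @ v) f = wop E u (wop E v f)"
  by (induction u) auto

lemma Top_lin: "finite K \<Longrightarrow> Top l i (\<lambda>X. \<Sum>k\<in>K. c k * h k X) X = (\<Sum>k\<in>K. c k * Top l i (h k) X)"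
  by (auto simp: Top_def sum_distrib_left sum_subtractf sum.distrib algebra_simps)

lemma Cop_lin: "finite K \<Longrightarrow> Cop j (\<lambda>X. \<Sum>k\<in>K. c k * h k X) X = (\<Sum>k\<in>K. c k * Cop j (h k) X)"
  by (auto simp: Cop_def sum_distrib_left sum_negf algebra_simps)

lemma gop_lin: "finite K \<Longrightarrow> gop E g (\<lambda>X. \<Sum>k\<in>K. c k * h k X) X = (\<Sum>k\<in>K. c k * gop E g (h k) X)"
  by (cases g) (auto simp: Top_lin Cop_lin)

lemma wop_lin: "finite K \<Longrightarrow> wop E w (\<lambda>X. \<Sum>k\<in>K. c k * h k X) X = (\<Sum>k\<in>K. c k * wop E w (h k) X)"
proof (induction w arbitrary: X)
  case Nil then show ?case by simp
next
  case (Cons g w)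
  have eq: "wop E w (\<lambda>X. \<Sum>k\<in>K. c k * h k X) = (\<lambda>X. \<Sum>k\<in>K. c k * wop E w (h k) X)"
    by (rule ext) (rule Cons.IH[OF Cons.prems])
  have "wop E (g # w) (\<lambda>X. \<Sum>k\<in>K. c k * h k X) X = gop E g (\<lambda>X. \<Sum>k\<in>K. c k * wop E w (h k) X) X"
    by (simp add: eq)
  also have "\<dots> = (\<Sum>k\<in>K. c k * gop E g (wop E w (h k)) X)" using Cons.prems by (rule gop_lin)
  finally show ?case by simp
qed

lemma wop_zero: "wop E w (\<lambda>_. 0) X = 0"
  using wop_lin[of "{}" E w "\<lambda>_. 0" "\<lambda>_ _. 0" X] by simp

definition Op :: "nat set \<Rightarrow> fa \<Rightarrow> vec \<Rightarrow> vec" where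
  "Op E p f X = (\<Sum>w\<in>{w. p w \<noteq> 0}. p w * wop E w f X)"

lemma Op_sup: "finite S \<Longrightarrow> {w. p w \<noteq> 0} \<subseteq> S \<Longrightarrow> Op E p f X = (\<Sum>w\<in>S. p w * wop E w f X)"
  unfolding Op_def by (rule sum.mono_neutral_left) auto

lemma fadd_supp: "{w. fadd p q w \<noteq> 0} \<subseteq> {w. p w \<noteq> 0} \<union> {w. q w \<noteq> 0}"
  by (auto simp: fadd_def)

lemma Op_fadd:
  assumes "finite {w. p w \<noteq> 0}" "finite {w. q w \<noteq> 0}"
  shows "Op E (fadd p q) f X = Op E p f X + Op E q f X"
proof -
  let ?S = "{w. p w \<noteq> 0} \<union> {w. q w \<noteq> 0}"
  have "Op E (fadd p q) f X = (\<Sum>w\<in>?S. fadd p q w * wop E w f X)"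
    using assms fadd_supp by (intro Op_sup) auto
  also have "\<dots> = (\<Sum>w\<in>?S. p w * wop E w f X) + (\<Sum>w\<in>?S. q w * wop E w f X)"
    by (simp add: fadd_def ring_distribs sum.distrib)
  also have "\<dots> = Op E p f X + Op E q f X"
  proof -
    have "Op E p f X = (\<Sum>w\<in>?S. p w * wop E w f X)" using assms by (intro Op_sup) auto
    moreover have "Op E q f X = (\<Sum>w\<in>?S. q w * wop E w f X)" using assms by (intro Op_sup) auto
    ultimately show ?thesis by simp
  qed
  finally show ?thesis .
qed

lemma Op_zero_p: "Op E (\<lambda>_. 0) f X = 0"
  by (simp add: Op_def)

lemma Op_zero_f: "Op E p (\<lambda>_. 0) X = 0"
  by (simp add: Op_def wop_zero)

lemma Op_sing: "Op E (sing c u) f X = c * wop E u f X"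
proof -
  have "Op E (sing c u) f X = (\<Sum>w\<in>{u}. sing c u w * wop E w f X)"
    by (rule Op_sup) (auto simp: sing_def split: if_splits)
  then show ?thesis by (simp add: sing_def)
qed

lemma sing_fin: "finite {w. sing c u w \<noteq> 0}"
  by (rule finite_subset[of _ "{u}"]) (auto simp: sing_def split: if_splits)

lemma Op_comb: "Op E (comb xs) f X = (\<Sum>(c,u)\<leftarrow>xs. c * wop E u f X)"
proof (induction xs)
  case Nil then show ?case by (simp add: Op_zero_p)
next
  case (Cons x xs)
  obtain c u where x: "x = (c,u)" by force
  show ?case unfolding x comb_Cons
    by (simp add: Op_fadd sing_fin comb_fin Op_sing Cons)
qed


lemma wop_add: "wop E u (\<lambda>Y. a * h1 Y + h2 Y) X = a * wop E u h1 X + wop E u h2 X"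
proof -
  have "wop E u (\<lambda>Y. \<Sum>k\<in>{0::nat,1}. (if k = 0 then a else 1) * (if k = 0 then h1 else h2) Y) X
      = (\<Sum>k\<in>{0::nat,1}. (if k = 0 then a else 1) * wop E u (if k = 0 then h1 else h2) X)"
    by (rule wop_lin) simp
  then show ?thesis by simp
qed

lemma wop_lin_list: "wop E u (\<lambda>Y. \<Sum>(d,v)\<leftarrow>ys. d * g v Y) X = (\<Sum>(d,v)\<leftarrow>ys. d * wop E u (g v) X)"
proof (induction ys arbitrary: X)
  case Nil then show ?case by (simp add: wop_zero)
next
  case (Cons y ys)
  obtain d v where y: "y = (d,v)" by force
  have "wop E u (\<lambda>Y. \<Sum>(d,v)\<leftarrow>y#ys. d * g v Y) X = wop E u (\<lambda>Y. d * g v Y + (\<Sum>(d,v)\<leftarrow>ys. d * g v Y)) X"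
    by (simp add: y)
  also have "\<dots> = d * wop E u (g v) X + wop E u (\<lambda>Y. \<Sum>(d,v)\<leftarrow>ys. d * g v Y) X" by (rule wop_add)
  finally show ?case using Cons by (simp add: y)
qed

lemma Op_comb_fun: "Op E (comb xs) f = (\<lambda>X. \<Sum>(c,u)\<leftarrow>xs. c * wop E u f X)"
  by (rule ext) (rule Op_comb)

lemma Op_fmul_comb: "Op E (comb (cprod xs ys)) f X = Op E (comb xs) (Op E (comb ys) f) X"
proof (induction xs)
  case Nil then show ?case by (simp add: Op_zero_p)
next
  case (Cons x xs)
  obtain c u where x: "x = (c,u)" by force
  have "(\<Sum>(e,w)\<leftarrow>map (\<lambda>(d,v). (c*d, u@v)) ys. e * wop E w f X) = c * wop E u (Op E (comb ys) f) X"
    unfolding Op_comb_fun wop_lin_list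
    by (induction ys) (auto simp: wop_append algebra_simps)
  then show ?case using Cons by (simp add: x cprod_Cons Op_comb_fun)
qed

lemma Op_fmul:
  assumes "finite {w. p w \<noteq> 0}" "finite {w. q w \<noteq> 0}"
  shows "Op E (fmul p q) f X = Op E p (Op E q f) X"
proof -
  obtain xs ys where "p = comb xs" "q = comb ys" using comb_rep assms by metis
  then show ?thesis by (simp add: fmul_comb Op_fmul_comb)
qed

lemma T_sq': "Top (lam E i) i (Top (lam E i) i f) X = - Top (lam E i) i f X"
  by (rule T_sq) (rule lam_cases)

lemma braid': "Top (lam E i) i (Top (lam E (Suc i)) (Suc i) (Top (lam E i) i f)) X
   = Top (lam E (Suc i)) (Suc i) (Top (lam E i) i (Top (lam E (Suc i)) (Suc i) f)) X"
  by (rule braid) (rule lam_cases)+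

lemma rels_Op:
  assumes "r \<in> rels n"
  shows "Op E r f X = 0"
proof -
  from assms consider
      (r1) i where "r = comb [(1,[T i,T i]),(1,[T i])]"
    | (r2) i j where "r = comb [(1,[T i,T j]),(-1,[T j,T i])]" "i + 1 < j \<or> j + 1 < i"
    | (r3) i where "r = comb [(1,[T i,T (i+1),T i]),(-1,[T (i+1),T i,T (i+1)])]"
    | (r4) i j where "r = comb [(1,[C i,C j]),(1,[C j,C i])]" "i \<noteq> j"
    | (r5) i where "r = comb [(1,[C i,C i]),(1,[])]"
    | (r6) i j where "r = comb [(1,[T i,C j]),(-1,[C j,T i])]" "j \<noteq> i" "j \<noteq> i+1"
    | (r7) i where "r = comb [(1,[T i,C i]),(-1,[C (i+1),T i])]"
    | (r8) i where "r = comb [(1,[T i,C (i+1)]),(1,[C (i+1)]),(-1,[C i,T i]),(-1,[C i])]"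
    unfolding rels_def by blast
  then show ?thesis
  proof cases
    case r1 then show ?thesis by (simp add: Op_comb T_sq')
  next
    case r2
    then show ?thesis
    proof (cases "i + 1 < j")
      case True
      then have "Top (lam E i) i (Top (lam E j) j f) X = Top (lam E j) j (Top (lam E i) i f) X"
        by (intro T_comm) simp
      then show ?thesis using r2 by (simp add: Op_comb)
    next
      case False
      then have "Suc j < i" using r2 by simp
      then have "Top (lam E j) j (Top (lam E i) i f) X = Top (lam E i) i (Top (lam E j) j f) X"
        by (intro T_comm) simp
      then show ?thesis using r2 by (simp add: Op_comb)
    qed
  next
    case r3 then show ?thesis by (simp add: Op_comb braid')
  next
    case r4 then show ?thesis using C_anti[of i j f X] by (simp add: Op_comb)
  next
    case r5 then show ?thesis by (simp add: Op_comb C_sq)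
  next
    case r6 then show ?thesis by (simp add: Op_comb TC_comm)
  next
    case r7 then show ?thesis by (simp add: Op_comb TC1)
  next
    case r8 then show ?thesis using TC2[of "lam E i" i f X] by (simp add: Op_comb algebra_simps)
  qed
qed


lemma local_zero:
  assumes h1: "\<And>Y. Top l1 i w Y = 0" and h2: "\<And>Y. Top l2 (Suc i) w Y = - w Y"
    and l: "(l1 = 0 \<and> l2 = 0) \<or> (l1 = -1 \<and> l2 = 0) \<or> (l1 = -1 \<and> l2 = -1)"
  shows "w X = 0"
proof -
  define S where "S b1 b2 b3 = upd (upd (upd X i b1) (Suc i) b2) (Suc (Suc i)) b3" for b1 b2 b3
  define v where "v b1 b2 b3 = w (S b1 b2 b3)" for b1 b2 b3
  have X: "X = S (i \<in> X) (Suc i \<in> X) (Suc (Suc i) \<in> X)" by (simp add: S_def)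
  have A11: "-(l1+1) * v True True b = 0" for b
    using h1[of "S True True b"] by (simp add: Top_def S_def v_def upd_comm)
  have A10: "(l1+1) * v False True b = 0" for b
    using h1[of "S True False b"] by (simp add: Top_def S_def v_def upd_comm)
  have A01: "l1 * v True False b - v False True b = 0" for b
    using h1[of "S False True b"] by (simp add: Top_def S_def v_def upd_comm)
  have A00: "l1 * v False False b + v True True b = 0" for b
    using h1[of "S False False b"] by (simp add: Top_def S_def v_def upd_comm)
  have B11: "-(l2+1) * v b True True = - v b True True" for b
    using h2[of "S b True True"] by (simp add: Top_def S_def v_def upd_comm)
  have B10: "(l2+1) * v b False True = - v b True False" for b
    using h2[of "S b True False"] by (simp add: Top_def S_def v_def upd_comm)
  have B01: "l2 * v b True False - v b False True = - v b False True" for b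
    using h2[of "S b False True"] by (simp add: Top_def S_def v_def upd_comm)
  have B00: "l2 * v b False False + v b True True = - v b False False" for b
    using h2[of "S b False False"] by (simp add: Top_def S_def v_def upd_comm)
  note F = A11[of False] A11[of True] A10[of False] A10[of True] A01[of False] A01[of True] A00[of False] A00[of True] B11[of False] B11[of True] B10[of False] B10[of True] B01[of False] B01[of True] B00[of False] B00[of True]
  have Z8: "v False False False = 0 \<and> v False False True = 0 \<and> v False True False = 0 \<and> v False True True = 0 \<and> v True False False = 0 \<and> v True False True = 0 \<and> v True True False = 0 \<and> v True True True = 0"
  proof -
    consider "l1 = 0" "l2 = 0" | "l1 = -1" "l2 = -1" | "l1 = -1" "l2 = 0" using l by blast
    then show ?thesis
    proof cases
      case 1 then show ?thesis using F by (intro conjI) algebra+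
    next
      case 2 then show ?thesis using F by (intro conjI) algebra+
    next
      case 3 then show ?thesis using F by (intro conjI) algebra+
    qed
  qed
  have Z: "v b1 b2 b3 = 0" for b1 b2 b3
    using Z8 by (cases b1; cases b2; cases b3) auto
  show ?thesis by (subst X) (rule Z[unfolded v_def])
qed

lemma Rideal_Op: "x \<in> Rideal n \<Longrightarrow> Op E x f X = 0"
proof (induction x arbitrary: f X rule: Rideal.induct)
  case (rel r) then show ?case by (rule rels_Op)
next
  case zero then show ?case by (rule Op_zero_p)
next
  case (add x y)
  have fx: "finite {w. x w \<noteq> 0}" by (rule FA_fin[OF Rideal_FA[OF add.hyps(1)]])
  have fy: "finite {w. y w \<noteq> 0}" by (rule FA_fin[OF Rideal_FA[OF add.hyps(2)]])
  show ?case by (simp add: Op_fadd[OF fx fy] add.IH)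
next
  case (lmul a x)
  have "Op E (fmul a x) f X = Op E a (Op E x f) X"
    by (rule Op_fmul[OF FA_fin[OF lmul.hyps(1)] FA_fin[OF Rideal_FA[OF lmul.hyps(2)]]])
  also have "Op E x f = (\<lambda>_. 0)" using lmul by (intro ext) auto
  finally show ?case by (simp add: Op_zero_f)
next
  case (rmul a x)
  have "Op E (fmul x a) f X = Op E x (Op E a f) X"
    by (rule Op_fmul[OF FA_fin[OF Rideal_FA[OF rmul.hyps(2)]] FA_fin[OF rmul.hyps(1)]])
  then show ?case using rmul by simp
qed

definition ev :: vec where "ev X = (if X = {} then 1 else 0)"

lemma upd_True_ne[simp]: "upd X k True \<noteq> {}"
  by (auto simp: upd_def)

lemma Op_gen: "Op E (comb [(1,[T j]),(c,[])]) f X = Top (lam E j) j f X + c * f X"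
  by (simp add: Op_comb)

lemma gen_ev: "Top (lam E j) j ev X + (if j \<in> E then 1 else 0) * ev X = 0"
  by (auto simp: Top_def ev_def lam_def)

lemma NIs_Op: "x \<in> NIs n E \<Longrightarrow> Op E x ev X = 0"
proof (induction x arbitrary: X rule: NIs.induct)
  case (ideal x) then show ?case by (rule Rideal_Op)
next
  case (gen j) then show ?case by (simp add: Op_gen gen_ev)
next
  case (add x y)
  have fx: "finite {w. x w \<noteq> 0}" by (rule FA_fin[OF NIs_FA[OF add.hyps(1)]])
  have fy: "finite {w. y w \<noteq> 0}" by (rule FA_fin[OF NIs_FA[OF add.hyps(2)]])
  show ?case by (simp add: Op_fadd[OF fx fy] add.IH)
next
  case (lmul a x)
  have "Op E (fmul a x) ev X = Op E a (Op E x ev) X"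
    by (rule Op_fmul[OF FA_fin[OF lmul.hyps(1)] FA_fin[OF NIs_FA[OF lmul.hyps(2)]]])
  also have "Op E x ev = (\<lambda>_. 0)" using lmul by (intro ext) auto
  finally show ?case by (simp add: Op_zero_f)
qed

lemma Op_fsub:
  assumes "finite {w. p w \<noteq> 0}" "finite {w. q w \<noteq> 0}"
  shows "Op E (fsub p q) f X = Op E p f X - Op E q f X"
proof -
  have fq: "finite {w. fmul (scal (-1)) q w \<noteq> 0}"
    by (rule finite_subset[OF _ assms(2)]) (auto simp: fmul_scal_left)
  have sc: "finite {w. scal (-1) w \<noteq> 0}" unfolding scal_def by (rule comb_fin)
  have "Op E (fsub p q) f X = Op E p f X + Op E (fmul (scal (-1)) q) f X"
    unfolding fsub_as_fadd using assms(1) fq by (rule Op_fadd)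
  also have "Op E (fmul (scal (-1)) q) f X = Op E (scal (-1)) (Op E q f) X"
    using sc assms(2) by (rule Op_fmul)
  also have "\<dots> = - Op E q f X" by (simp add: scal_def Op_comb)
  finally show ?thesis by simp
qed

lemma Op_one: "Op E one f X = f X"
  by (simp add: one_def Op_comb)

lemma gD_Op: "Op E (gD D j) f X = Top (lam E j) j f X + (if j \<in> D then 1 else 0) * f X"
  unfolding gD_def by (rule Op_gen)

lemma fsub_zero[simp]: "fsub x (\<lambda>_. 0) = x"
  by (simp add: fsub_def)

lemma fsub_FA: "x \<in> FA n \<Longrightarrow> y \<in> FA n \<Longrightarrow> fsub x y \<in> FA n"
  unfolding fsub_as_fadd by (intro fadd_FA fmul_FA scal_FA)

lemma eig_zero:
  assumes v: "v \<in> FA n" and g: "\<And>j. Tv n j \<Longrightarrow> fmul (gD P j) v \<in> NIs n M"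
    and aP: "a \<in> Lam P" and aM: "a \<notin> Lam M" and sub: "P \<subseteq> {1..<n}"
  shows "Op M v ev X = 0"
proof -
  have a: "a \<in> P" "a \<noteq> 1" "a - 1 \<notin> P" using aP unfolding Lam_def by auto
  have a2: "2 \<le> a" "a < n" using a sub by auto
  have aM': "a \<notin> M \<or> a - 1 \<in> M" using aM a(2) unfolding Lam_def by auto
  define W where "W = Op M v ev"
  have eq: "Top (lam M j) j W Y + (if j \<in> P then 1 else 0) * W Y = 0" if j: "Tv n j" for j Y
  proof -
    have gF: "gD P j \<in> FA n" using gD_NIs[OF j] by (rule NIs_FA)
    have "Op M (fmul (gD P j) v) ev Y = 0" using g[OF j] by (rule NIs_Op)
    moreover have "Op M (fmul (gD P j) v) ev Y = Op M (gD P j) W Y"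
      unfolding W_def by (rule Op_fmul[OF FA_fin[OF gF] FA_fin[OF v]])
    ultimately show ?thesis by (simp add: gD_Op)
  qed
  have t1: "Tv n (a - 1)" "Tv n a" using a2 by (auto simp: Tv_def)
  have h1: "Top (lam M (a-1)) (a-1) W Y = 0" for Y using eq[OF t1(1), of Y] a(3) by simp
  have h2: "Top (lam M (Suc (a-1))) (Suc (a-1)) W Y = - W Y" for Y
    using eq[OF t1(2), of Y] a(1) a2 by (simp add: algebra_simps add_eq_0_iff)
  have l: "(lam M (a-1) = 0 \<and> lam M (Suc (a-1)) = 0) \<or> (lam M (a-1) = -1 \<and> lam M (Suc (a-1)) = 0)
      \<or> (lam M (a-1) = -1 \<and> lam M (Suc (a-1)) = -1)"
    using aM' a2 by (auto simp: lam_def)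
  have "W X = 0" by (rule local_zero[OF h1 h2 l])
  then show ?thesis by (simp add: W_def)
qed

lemma contra:
  assumes v: "v \<in> FA n" and y: "y \<in> FA n" and W: "\<And>X. Op M v ev X = 0"
    and N: "fsub (fmul y v) one \<in> NIs n M"
  shows False
proof -
  have fyv: "finite {w. fmul y v w \<noteq> 0}" by (rule FA_fin[OF fmul_FA[OF y v]])
  have fo: "finite {w. one w \<noteq> 0}" by (rule FA_fin[OF one_FA])
  have "Op M (fsub (fmul y v) one) ev {} = 0" using N by (rule NIs_Op)
  then have "Op M (fmul y v) ev {} - Op M one ev {} = 0" by (simp add: Op_fsub[OF fyv fo])
  moreover have "Op M (fmul y v) ev {} = Op M y (Op M v ev) {}"
    by (rule Op_fmul[OF FA_fin[OF y] FA_fin[OF v]])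
  moreover have "Op M v ev = (\<lambda>_. 0)" using W by (intro ext)
  ultimately show False by (simp add: Op_zero_f Op_one ev_def)
qed

lemma forward:
  assumes S: "siso n D E" and sD: "D \<subseteq> {1..<n}" and sE: "E \<subseteq> {1..<n}"
  shows "Lam D = Lam E"
proof (rule ccontr)
  assume ne: "Lam D \<noteq> Lam E"
  obtain f where f1: "\<forall>x\<in>FA n. f x \<in> FA n"
    and f2: "\<forall>x\<in>FA n. \<forall>y\<in>FA n. fsub x y \<in> NIs n D \<longrightarrow> fsub (f x) (f y) \<in> NIs n E"
    and f3: "\<forall>x\<in>FA n. \<forall>y\<in>FA n. fsub (f (fadd x y)) (fadd (f x) (f y)) \<in> NIs n E"
    and f4: "\<forall>a\<in>FA n. \<forall>x\<in>FA n. fsub (f (fmul a x)) (fmul a (f x)) \<in> NIs n E"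
    and f5: "\<forall>x\<in>FA n. f x \<in> NIs n E \<longrightarrow> x \<in> NIs n D"
    and f6: "\<forall>y\<in>FA n. \<exists>x\<in>FA n. fsub (f x) y \<in> NIs n E"
    using S unfolding siso_def by blast
  have zF: "(\<lambda>_. 0) \<in> FA n" by (rule zero_FA)
  have f0: "f (\<lambda>_. 0) \<in> NIs n E"
    using f4[rule_format, OF zF one_FA] by simp
  define v where "v = f one"
  have vF: "v \<in> FA n" unfolding v_def using f1 one_FA by blast
  obtain x0 where x0: "x0 \<in> FA n" "fsub (f x0) one \<in> NIs n E" using f6 one_FA by blast
  have inj: "fsub p q \<in> NIs n D" if p: "p \<in> FA n" and q: "q \<in> FA n" and pq: "fsub (f p) (f q) \<in> NIs n E" for p q
  proof -
    define d where "d = fsub p q"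
    have dF: "d \<in> FA n" unfolding d_def using p q by (rule fsub_FA)
    have "fadd d q = p" unfolding d_def by (auto simp: fadd_def fsub_def)
    then have h: "fsub (f p) (fadd (f d) (f q)) \<in> NIs n E" using f3 dF q by metis
    have e: "f d = fsub (fsub (f p) (f q)) (fsub (f p) (fadd (f d) (f q)))"
      by (auto simp: fsub_def fadd_def)
    have "f d \<in> NIs n E" by (subst e) (rule NIs_fsub[OF pq h])
    then show ?thesis using f5 dF unfolding d_def by blast
  qed
  from ne obtain a where "(a \<in> Lam D \<and> a \<notin> Lam E) \<or> (a \<in> Lam E \<and> a \<notin> Lam D)" by blast
  then show False
  proof
    assume aa: "a \<in> Lam D \<and> a \<notin> Lam E"
    have g: "fmul (gD D j) v \<in> NIs n E" if j: "Tv n j" for j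
    proof -
      have gN: "gD D j \<in> NIs n D" using j by (rule gD_NIs)
      have gF: "gD D j \<in> FA n" using gN by (rule NIs_FA)
      have "fsub (f (gD D j)) (f (\<lambda>_. 0)) \<in> NIs n E" using f2 gF zF gN by simp
      then have fg: "f (gD D j) \<in> NIs n E" using f0 by (rule NIs_fsub_mem)
      have "fsub (f (gD D j)) (fmul (gD D j) v) \<in> NIs n E"
        using f4[rule_format, OF gF one_FA] unfolding v_def by simp
      then have "fsub (fmul (gD D j) v) (f (gD D j)) \<in> NIs n E" by (rule NIs_sym)
      then show ?thesis using fg by (rule NIs_fsub_mem)
    qed
    have W: "Op E v ev X = 0" for X
      using eig_zero[OF vF g] aa sD by blast
    have "fsub (f (fmul x0 one)) (fmul x0 v) \<in> NIs n E"
      using f4[rule_format, OF x0(1) one_FA] unfolding v_def .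
    then have "fsub (fmul x0 v) (f x0) \<in> NIs n E" by (simp add: NIs_sym)
    then have "fsub (fmul x0 v) one \<in> NIs n E" using x0(2) by (rule NIs_trans)
    then show False by (rule contra[OF vF x0(1) W])
  next
    assume aa: "a \<in> Lam E \<and> a \<notin> Lam D"
    have g: "fmul (gD E j) x0 \<in> NIs n D" if j: "Tv n j" for j
    proof -
      have gN: "gD E j \<in> NIs n E" using j by (rule gD_NIs)
      have gF: "gD E j \<in> FA n" using gN by (rule NIs_FA)
      have yF: "fmul (gD E j) x0 \<in> FA n" using gF x0(1) by (rule fmul_FA)
      have 1: "fsub (f (fmul (gD E j) x0)) (fmul (gD E j) (f x0)) \<in> NIs n E"
        using f4 gF x0(1) by blast
      have "fsub (fmul (gD E j) (f x0)) (fmul (gD E j) one) = fmul (gD E j) (fsub (f x0) one)"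
        by (simp add: fmul_fsub_right)
      then have 2: "fsub (fmul (gD E j) (f x0)) (gD E j) \<in> NIs n E"
        using NIs.lmul[OF gF x0(2)] by simp
      have "fsub (f (fmul (gD E j) x0)) (gD E j) \<in> NIs n E" using 1 2 by (rule NIs_trans)
      then have "f (fmul (gD E j) x0) \<in> NIs n E" using gN by (rule NIs_fsub_mem)
      then show ?thesis using f5 yF by blast
    qed
    have W: "Op D x0 ev X = 0" for X
      using eig_zero[OF x0(1) g] aa sE by blast
    have 1: "fsub (f (fmul v x0)) (fmul v (f x0)) \<in> NIs n E" using f4 vF x0(1) by blast
    have "fsub (fmul v (f x0)) (fmul v one) = fmul v (fsub (f x0) one)"
      by (simp add: fmul_fsub_right)
    then have 2: "fsub (fmul v (f x0)) (f one) \<in> NIs n E"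
      using NIs.lmul[OF vF x0(2)] unfolding v_def by simp
    have "fsub (f (fmul v x0)) (f one) \<in> NIs n E" using 1 2 by (rule NIs_trans)
    then have "fsub (fmul v x0) one \<in> NIs n D"
      using inj fmul_FA[OF vF x0(1)] one_FA by blast
    then show False by (rule contra[OF x0(1) vF W])
  qed
qed

theorem mainTheorem11:
  fixes n :: nat and I J :: "nat list"
  assumes "composition n I" and "composition n J"
  shows "super_iso n I J \<longleftrightarrow> HP I = HP J"
proof
  assume "super_iso n I J"
  then have "siso n (Des I) (Des J)" by (simp add: super_iso_sup)
  then have "Lam (Des I) = Lam (Des J)" using forward Des_sub assms by blast
  then show "HP I = HP J" by (simp add: HP_Lam)
next
  assume "HP I = HP J"
  then show "super_iso n I J" using dir_back assms by blast
qed

end
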